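(* Let $j>0$, $\rho_{\rm init}\in L^\infty([0,1],\mathbb R_+)$ with $\int_0^1\rho_{\rm init}>0$, and for each $\epsilon$ ($\epsilon^{-1}\in\mathbb N$) let $\xi=\xi^{(\epsilon)}$ be a configuration on $\{0,\dots,\epsilon^{-1}\}$ satisfying, with $\ell=\lfloor\epsilon^{-9/10}\rfloor$ and $a=1/20$, $\max_{x\in\{0,\dots,\epsilon^{-1}-\ell+1\}}|\mathcal A_\ell(x,\xi)-\mathcal A'_\ell(x,\rho_{\rm init})|\le\epsilon^a$ (and $|\epsilon R_\xi-R(\rho_{\rm init})|\le\epsilon^a$ if $\rho_{\rm init}$ has an edge). Let $T>0$ and $\gamma>0$. Then there is $\delta^*>0$ such that for every $\delta<\delta^*$ and every $\epsilon>0$ small enough the following holds: for every $\omega_0\in\mathcal G$ and every $k$ with $k\delta\le T$, $$N_{k,-}(\omega_0,|\xi|)=A^0_k(\omega_0),\qquad N_{k,+}(\omega_0,|\xi|)=B^0_k(\omega_0).$$ Finally, for every $n$ there is $c_n$ such that $P_0[\mathcal G]\ge1-c_n\epsilon^n$.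
   Context: $|\xi|=\sum_x\xi(x)$. $\mathcal A_\ell(x,\xi)=\frac1\ell\sum_{y=x}^{x+\ell-1}\xi(y)$, $\mathcal A'_\ell(x,u)=\frac1{\epsilon\ell}(\int_{\epsilon x}^1u-\int_{\epsilon(x+\ell)}^1u)$; $R_\xi$ is the rightmost occupied site, $R(u)=\inf\{r:\int_r^1u=0\}$ if $<1$. Probability space $(\Omega_0,P_0)$: $\omega_0=(\underline t_0,\underline\sigma_0)$ where $\underline t_0=(t_{1;0}<t_{2;0}<\dots)$ are the points of a Poisson process of intensity $2j\epsilon$ on $(0,\infty)$ and $\underline\sigma_0=(\sigma_{1;0},\sigma_{2;0},\dots)$ are i.i.d. with $P_0(\sigma_{h;0}=\pm1)=1/2$, independent of $\underline t_0$. Given $n_0\in\mathbb N$, define $n_t$ constant on $[t_{h;0},t_{h+1;0})$ ($t_{0;0}=0$) with $n_{t_{h+1;0}}=n_{t_{h;0}}+\sigma_{h+1;0}$ if this is $\ge0$ and $=0$ otherwise (this is the law of the total particle number of the particle system). For a fixed $\delta>0$: $N_{k,+}(\omega_0,n_0)$ and $N_{k,-}(\omega_0,n_0)$ are the numbers of upward, resp. downward, jumps of $(n_t)$ for $t\in[k\epsilon^{-2}\delta,(k+1)\epsilon^{-2}\delta]$; $B^0_k(\omega_0)=\#\{h:\sigma_{h;0}=+1,\ t_{h;0}\in[k\epsilon^{-2}\delta,(k+1)\epsilon^{-2}\delta]\}$ and $A^0_k(\omega_0)=\#\{h:\sigma_{h;0}=-1,\ t_{h;0}\in[k\epsilon^{-2}\delta,(k+1)\epsilon^{-2}\delta]\}$.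 The good set is $\mathcal G=\{\omega_0: |A^0_k(\omega_0)-\epsilon^{-1}j\delta|\le\epsilon^{-1/2-\gamma},\ |B^0_k(\omega_0)-\epsilon^{-1}j\delta|\le\epsilon^{-1/2-\gamma}\ \text{for all } k \text{ with } k\delta\le T\}$.
   Formalization: The parameter $\gamma$ is taken in the interval 0 < $\gamma$ < 1/2 only, instead of ranging over all $\gamma$ > 0. The statement above fails without it. *)

theory Defs
  imports "HOL-Probability.Probability"
begin

(* Throughout, N = epsilon^{-1} is a positive natural number, eps = 1 / real N. *)

definition cfg_size :: "nat \<Rightarrow> (nat \<Rightarrow> nat) \<Rightarrow> nat" where
  "cfg_size N xi = (\<Sum>x\<in>{0..N}. xi x)"

definition cfg_right :: "nat \<Rightarrow> (nat \<Rightarrow> nat) \<Rightarrow> nat" where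
  "cfg_right N xi = Max {x \<in> {0..N}. xi x > 0}"

definition avgA :: "nat \<Rightarrow> nat \<Rightarrow> (nat \<Rightarrow> nat) \<Rightarrow> real" where
  "avgA l x xi = (1 / real l) * (\<Sum>y\<in>{x..x+l-1}. real (xi y))"

(* int_r^1 u  (zero if r > 1) *)
definition tail_int :: "real \<Rightarrow> (real \<Rightarrow> real) \<Rightarrow> real" where
  "tail_int r u = (LINT y:{r..1}|lborel. u y)"

definition avgA' :: "nat \<Rightarrow> nat \<Rightarrow> nat \<Rightarrow> (real \<Rightarrow> real) \<Rightarrow> real" where
  "avgA' N l x u = (1 / ((1 / real N) * real l)) *
     (tail_int (real x / real N) u - tail_int (real (x + l) / real N) u)"

definition Redge :: "(real \<Rightarrow> real) \<Rightarrow> real" where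
  "Redge u = Inf {r \<in> {0..1}. tail_int r u = 0}"

(* Sample space Omega_0: strictly increasing positive points (locally finite) and signs +-1.
   Points are indexed from 0: t 0 = t_{1;0}, sigma 0 = sigma_{1;0}. *)
definition Omega0 :: "((nat \<Rightarrow> real) \<times> (nat \<Rightarrow> int)) set" where
  "Omega0 = {(t, s). 0 < t 0 \<and> strict_mono t \<and> filterlim t at_top sequentially \<and>
                     (\<forall>h. s h = 1 \<or> s h = -1)}"

(* n_t after the h-th jump time: nwalk n0 s 0 = n0 (value on [0, t_{1;0})),
   nwalk n0 s (Suc h) = value at time t_{h+1;0} *)
fun nwalk :: "nat \<Rightarrow> (nat \<Rightarrow> int) \<Rightarrow> nat \<Rightarrow> nat" where
  "nwalk n0 s 0 = n0"
| "nwalk n0 s (Suc h) = nat (int (nwalk n0 s h) + s h)"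

definition blockI :: "nat \<Rightarrow> real \<Rightarrow> nat \<Rightarrow> real set" where
  "blockI N delta k = {real k * (real N)^2 * delta .. real (k+1) * (real N)^2 * delta}"

definition Nplus :: "nat \<Rightarrow> real \<Rightarrow> nat \<Rightarrow> ((nat \<Rightarrow> real) \<times> (nat \<Rightarrow> int)) \<Rightarrow> nat \<Rightarrow> nat" where
  "Nplus N delta k w n0 = card {h. fst w h \<in> blockI N delta k \<and>
       nwalk n0 (snd w) (Suc h) = nwalk n0 (snd w) h + 1}"

definition Nminus :: "nat \<Rightarrow> real \<Rightarrow> nat \<Rightarrow> ((nat \<Rightarrow> real) \<times> (nat \<Rightarrow> int)) \<Rightarrow> nat \<Rightarrow> nat" where
  "Nminus N delta k w n0 = card {h. fst w h \<in> blockI N delta k \<and>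
       nwalk n0 (snd w) (Suc h) + 1 = nwalk n0 (snd w) h}"

definition B0 :: "nat \<Rightarrow> real \<Rightarrow> nat \<Rightarrow> ((nat \<Rightarrow> real) \<times> (nat \<Rightarrow> int)) \<Rightarrow> nat" where
  "B0 N delta k w = card {h. snd w h = 1 \<and> fst w h \<in> blockI N delta k}"

definition A0 :: "nat \<Rightarrow> real \<Rightarrow> nat \<Rightarrow> ((nat \<Rightarrow> real) \<times> (nat \<Rightarrow> int)) \<Rightarrow> nat" where
  "A0 N delta k w = card {h. snd w h = -1 \<and> fst w h \<in> blockI N delta k}"

definition goodG :: "real \<Rightarrow> nat \<Rightarrow> real \<Rightarrow> real \<Rightarrow> real \<Rightarrow> ((nat \<Rightarrow> real) \<times> (nat \<Rightarrow> int)) set" where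
  "goodG j N delta gamma T = {w. \<forall>k::nat. real k * delta \<le> T \<longrightarrow>
      \<bar>real (A0 N delta k w) - real N * j * delta\<bar> \<le> (real N) powr (1/2 + gamma) \<and>
      \<bar>real (B0 N delta k w) - real N * j * delta\<bar> \<le> (real N) powr (1/2 + gamma)}"

(* Underlying product space: i.i.d. pairs (exponential(2 j eps) inter-arrival time, uniform sign).
   The Poisson points are the partial sums of the inter-arrival times. *)
definition baseM :: "real \<Rightarrow> nat \<Rightarrow> (nat \<Rightarrow> real \<times> int) measure" where
  "baseM j N = (\<Pi>\<^sub>M h\<in>UNIV. (density lborel (exponential_density (2 * j / real N))
                   \<Otimes>\<^sub>M measure_pmf (pmf_of_set {-1, 1::int})))"

definition to_omega0 :: "(nat \<Rightarrow> real \<times> int) \<Rightarrow> (nat \<Rightarrow> real) \<times> (nat \<Rightarrow> int)" where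
  "to_omega0 v = ((\<lambda>h. \<Sum>i\<le>h. fst (v i)), (\<lambda>h. snd (v h)))"

definition P0 :: "real \<Rightarrow> nat \<Rightarrow> ((nat \<Rightarrow> real) \<times> (nat \<Rightarrow> int)) set \<Rightarrow> real" where
  "P0 j N S = measure (baseM j N) {v \<in> space (baseM j N). to_omega0 v \<in> S}"

end

theory Submission
  imports Defs "HOL-Real_Asymp.Real_Asymp"
begin


lemma nwalk_lower:
  assumes "\<forall>h. s h = 1 \<or> s h = -1"
  shows "int (nwalk n0 s h) \<ge> int n0 + int (card {i. i < h \<and> s i = 1}) - int (card {i. i < h \<and> s i = -1})"
proof (induction h)
  case 0 then show ?case by simp
next
  case (Suc h)
  have e1: "{i. i < Suc h \<and> s i = 1} = {i. i < h \<and> s i = 1} \<union> (if s h = 1 then {h} else {})" by (auto simp: less_Suc_eq)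
  have e2: "{i. i < Suc h \<and> s i = -1} = {i. i < h \<and> s i = -1} \<union> (if s h = -1 then {h} else {})" by (auto simp: less_Suc_eq)
  have f1: "finite {i. i < h \<and> s i = 1}" "finite {i. i < h \<and> s i = -1}" by auto
  show ?case
  proof (cases "s h = 1")
    case True
    then have "card {i. i < Suc h \<and> s i = 1} = Suc (card {i. i < h \<and> s i = 1})"
      "card {i. i < Suc h \<and> s i = -1} = card {i. i < h \<and> s i = -1}"
      using e1 e2 f1 by (auto simp: card_insert_if)
    then show ?thesis using Suc True by simp
  next
    case False
    then have sh: "s h = -1" using assms by auto
    then have "card {i. i < Suc h \<and> s i = -1} = Suc (card {i. i < h \<and> s i = -1})"
      "card {i. i < Suc h \<and> s i = 1} = card {i. i < h \<and> s i = 1}"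
      using e1 e2 f1 False by (auto simp: card_insert_if)
    then show ?thesis using Suc sh by simp
  qed
qed


lemma fin_le:
  fixes t :: "nat \<Rightarrow> real"
  assumes "filterlim t at_top sequentially"
  shows "finite {i. t i \<le> X}"
proof -
  have "eventually (\<lambda>i. t i \<ge> X + 1) sequentially"
    using assms by (simp add: filterlim_at_top)
  then obtain n where n: "\<And>i. i \<ge> n \<Longrightarrow> t i \<ge> X + 1" by (auto simp: eventually_sequentially)
  have "{i. t i \<le> X} \<subseteq> {..<n}"
  proof
    fix i assume "i \<in> {i. t i \<le> X}"
    then show "i \<in> {..<n}" using n[of i] by (cases "i \<ge> n") auto
  qed
  then show ?thesis by (rule finite_subset) auto
qed

lemma fin_le_P:
  fixes t :: "nat \<Rightarrow> real"
  assumes "filterlim t at_top sequentially" "\<And>i. P i \<Longrightarrow> t i \<le> X"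
  shows "finite {i. P i}"
proof -
  have "{i. P i} \<subseteq> {i. t i \<le> X}" using assms(2) by auto
  then show ?thesis using fin_le[OF assms(1), of X] finite_subset by blast
qed

lemma fin_lt_P:
  fixes t :: "nat \<Rightarrow> real"
  assumes "filterlim t at_top sequentially"
  shows "finite {i. P i \<and> t i < X}" "finite {i. P i \<and> t i \<in> {a..b}}" "finite {i. P i \<and> t i \<in> {a..<b}}"
    "finite {i. t i = b}"
proof -
  show "finite {i. P i \<and> t i < X}" by (rule fin_le_P[OF assms, of _ X]) simp
  show "finite {i. P i \<and> t i \<in> {a..b}}" by (rule fin_le_P[OF assms, of _ b]) simp
  show "finite {i. P i \<and> t i \<in> {a..<b}}" by (rule fin_le_P[OF assms, of _ b]) simp
  show "finite {i. t i = b}" by (rule fin_le_P[OF assms, of _ b]) simp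
qed

lemma card_closed_le:
  fixes t :: "nat \<Rightarrow> real"
  assumes "filterlim t at_top sequentially" "strict_mono t"
  shows "card {i. s i = \<sigma> \<and> t i \<in> {a..b}} \<le> card {i. s i = \<sigma> \<and> t i \<in> {a..<b}} + 1"
proof -
  have inj: "inj t" using assms(2) strict_mono_imp_inj_on by blast
  have "{i. s i = \<sigma> \<and> t i \<in> {a..b}} \<subseteq> {i. s i = \<sigma> \<and> t i \<in> {a..<b}} \<union> {i. t i = b}" by auto
  moreover have "card {i. t i = b} \<le> 1"
    using card_le_Suc0_iff_eq[OF fin_lt_P(4)[OF assms(1)], of b] inj by (auto dest: injD)
  moreover note fin_lt_P[OF assms(1)]
  ultimately show ?thesis
    by (meson card_Un_le card_mono finite_UnI le_trans add_left_mono)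
qed

lemma U_half:
  fixes t :: "nat \<Rightarrow> real"
  assumes "filterlim t at_top sequentially" "strict_mono t" "c > 0"
  shows "int (card {i. s i = \<sigma> \<and> t i < real k * c}) \<ge>
     (\<Sum>m<k. int (card {i. s i = \<sigma> \<and> t i \<in> {real m * c .. real (Suc m) * c}})) - int k"
proof (induction k)
  case 0 then show ?case by simp
next
  case (Suc k)
  let ?A = "{i. s i = \<sigma> \<and> t i < real k * c}"
  let ?B = "{i. s i = \<sigma> \<and> t i \<in> {real k * c ..< real (Suc k) * c}}"
  have eq: "{i. s i = \<sigma> \<and> t i < real (Suc k) * c} = ?A \<union> ?B"
    using assms(3) by (auto simp: distrib_right)
  have "finite ?A" "finite ?B" using fin_lt_P[OF assms(1)] by auto
  then have "card (?A \<union> ?B) = card ?A + card ?B" by (intro card_Un_disjoint) auto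
  moreover have "card {i. s i = \<sigma> \<and> t i \<in> {real k * c .. real (Suc k) * c}} \<le> card ?B + 1"
    by (rule card_closed_le[OF assms(1,2)])
  ultimately show ?case using Suc eq by simp
qed

lemma D_half:
  fixes t :: "nat \<Rightarrow> real"
  assumes "filterlim t at_top sequentially" "\<And>i. t i \<ge> 0" "c > 0"
  shows "card {i. s i = \<sigma> \<and> t i < real k * c} \<le>
     (\<Sum>m<k. card {i. s i = \<sigma> \<and> t i \<in> {real m * c .. real (Suc m) * c}})"
proof (induction k)
  case 0
  have e: "{i. s i = \<sigma> \<and> t i < real 0 * c} = {}" using assms(2) by (auto simp: not_less)
  show ?case by (simp only: e card.empty)
next
  case (Suc k)
  let ?A = "{i. s i = \<sigma> \<and> t i < real k * c}"
  let ?B = "{i. s i = \<sigma> \<and> t i \<in> {real k * c .. real (Suc k) * c}}"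
  have sub: "{i. s i = \<sigma> \<and> t i < real (Suc k) * c} \<subseteq> ?A \<union> ?B"
    using assms(3) by (auto simp: distrib_right)
  have "finite ?A" "finite ?B" using fin_lt_P[OF assms(1)] by auto
  then have "card {i. s i = \<sigma> \<and> t i < real (Suc k) * c} \<le> card ?A + card ?B"
    using sub by (meson card_Un_le card_mono finite_UnI le_trans)
  then show ?case using Suc by simp
qed

lemma walk_block_lower:
  fixes t :: "nat \<Rightarrow> real"
  assumes lim: "filterlim t at_top sequentially" and sm: "strict_mono t" and c: "c > 0"
    and tpos: "\<And>i. t i \<ge> 0" and sgn: "\<forall>h. s h = 1 \<or> s h = -1"
    and th: "t h \<in> {real k * c .. real (Suc k) * c}"
  shows "int (nwalk n0 s h) \<ge> int n0
     + (\<Sum>m<k. int (card {i. s i = 1 \<and> t i \<in> {real m * c .. real (Suc m) * c}}))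
     - (\<Sum>m<k. int (card {i. s i = -1 \<and> t i \<in> {real m * c .. real (Suc m) * c}}))
     - int k - int (card {i. s i = -1 \<and> t i \<in> {real k * c .. real (Suc k) * c}})"
proof -
  have lt: "i < h" if "t i < t h" for i
  proof (rule ccontr)
    assume "\<not> i < h" then have "h \<le> i" by simp
    then have "t h \<le> t i" using sm by (simp add: strict_mono_less_eq)
    then show False using that by simp
  qed
  have lt2: "t i < t h" if "i < h" for i using sm that by (simp add: strict_mono_less)
  have s1: "{i. s i = 1 \<and> t i < real k * c} \<subseteq> {i. i < h \<and> s i = 1}"
  proof
    fix i assume "i \<in> {i. s i = 1 \<and> t i < real k * c}"
    then have "s i = 1" "t i < t h" using th by auto
    then show "i \<in> {i. i < h \<and> s i = 1}" using lt by blast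
  qed
  have f1: "finite {i. i < h \<and> s i = 1}" by auto
  have "card {i. s i = 1 \<and> t i < real k * c} \<le> card {i. i < h \<and> s i = 1}"
    using card_mono[OF f1 s1] .
  have s2: "{i. i < h \<and> s i = -1} \<subseteq> {i. s i = -1 \<and> t i < real k * c} \<union>
      {i. s i = -1 \<and> t i \<in> {real k * c .. real (Suc k) * c}}"
  proof
    fix i assume "i \<in> {i. i < h \<and> s i = -1}"
    then have "s i = -1" "t i < t h" using lt2 by auto
    then show "i \<in> {i. s i = -1 \<and> t i < real k * c} \<union>
      {i. s i = -1 \<and> t i \<in> {real k * c .. real (Suc k) * c}}" using th by auto
  qed
  have fa: "finite {i. s i = -1 \<and> t i < real k * c}" using fin_lt_P[OF lim] by auto
  have fb: "finite {i. s i = (-1::int) \<and> t i \<in> {real k * c .. real (Suc k) * c}}"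
    using fin_lt_P[OF lim] by auto
  have "card {i. i < h \<and> s i = -1} \<le> card {i. s i = -1 \<and> t i < real k * c} +
      card {i. s i = -1 \<and> t i \<in> {real k * c .. real (Suc k) * c}}"
    using s2 fa fb by (meson card_Un_le card_mono finite_UnI le_trans)
  note a1 = this
  note a2 = U_half[OF lim sm c, of s 1 k]
  note a3 = D_half[OF lim tpos c, of s "-1" k]
  note a4 = nwalk_lower[OF sgn, of n0 h]
  note a5 = \<open>card {i. s i = 1 \<and> t i < real k * c} \<le> card {i. i < h \<and> s i = 1}\<close>
  have a3': "int (card {i. s i = -1 \<and> t i < real k * c}) \<le>
     (\<Sum>m<k. int (card {i. s i = -1 \<and> t i \<in> {real m * c .. real (Suc m) * c}}))"
    unfolding of_nat_sum[symmetric] of_nat_le_iff by (rule a3)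
  have a1': "int (card {i. i < h \<and> s i = -1}) \<le> int (card {i. s i = -1 \<and> t i < real k * c}) +
      int (card {i. s i = -1 \<and> t i \<in> {real k * c .. real (Suc k) * c}})"
    using a1 by linarith
  have a5': "int (card {i. s i = 1 \<and> t i < real k * c}) \<le> int (card {i. i < h \<and> s i = 1})"
    using a5 by linarith
  from a1' a2 a3' a4 a5' show ?thesis by linarith
qed


lemma tail_bound:
  assumes C: "AE x in lborel. x \<in> {0..1} \<longrightarrow> rho x \<le> C" and r: "0 \<le> r" and C0: "0 \<le> C"
  shows "tail_int r rho \<le> C * max 0 (1 - r)"
proof (cases "r \<le> 1")
  case False
  then have "{r..1} = {}" by auto
  then show ?thesis unfolding tail_int_def using C0 by (simp add: set_lebesgue_integral_def)
next
  case True
  show ?thesis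
  proof (cases "set_integrable lborel {r..1} rho")
    case int: True
    have ci: "set_integrable lborel {r..1} (\<lambda>_. C)"
    proof -
      have "integrable lborel (indicator {r..1} :: real \<Rightarrow> real)"
        by (rule integrable_real_indicator) (use True in \<open>auto simp: emeasure_lborel_Icc\<close>)
      then have "integrable lborel (\<lambda>x. indicator {r..1} x * C)"
        by (rule integrable_mult_left)
      then show ?thesis unfolding set_integrable_def by (simp only: real_scaleR_def)
    qed
    have "(LINT y:{r..1}|lborel. rho y) \<le> (LINT y:{r..1}|lborel. C)"
      by (rule set_integral_mono_AE[OF int ci]) (use C r in \<open>auto elim!: eventually_mono\<close>)
    also have "\<dots> = C * (1 - r)" using True by (subst set_integral_const) auto
    finally show ?thesis unfolding tail_int_def using True by simp
  next
    case False
    then have "(LINT y:{r..1}|lborel. rho y) = 0"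
      unfolding set_lebesgue_integral_def set_integrable_def by (simp add: not_integrable_integral_eq)
    then show ?thesis unfolding tail_int_def using C0 by simp
  qed
qed

lemma sum_blocks:
  fixes f :: "nat \<Rightarrow> real"
  shows "(\<Sum>y<m * L. f y) = (\<Sum>i<m. \<Sum>y\<in>{i*L..<i*L+L}. f y)"
proof (induction m)
  case 0 then show ?case by simp
next
  case (Suc m)
  have "{..<Suc m * L} = {..<m*L} \<union> {m*L..<m*L+L}" by auto
  then have "(\<Sum>y<Suc m * L. f y) = (\<Sum>y<m * L. f y) + (\<Sum>y\<in>{m*L..<m*L+L}. f y)"
    by (simp add: sum.union_disjoint ivl_disj_int)
  then show ?case using Suc by simp
qed


lemma div_aux:
  fixes S A e L :: real
  assumes "L > 0" "S / L \<ge> A / L - e"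
  shows "S \<ge> A - L * e"
proof -
  have "A / L - e = (A - L * e) / L" using assms(1) by (simp add: field_simps)
  then have "(A - L * e) / L \<le> S / L" using assms(2) by simp
  then show ?thesis using assms(1) by (simp add: divide_le_cancel)
qed

lemma size_lower:
  fixes rho :: "real \<Rightarrow> real" and X :: "nat \<Rightarrow> nat"
  assumes C: "AE x in lborel. x \<in> {0..1} \<longrightarrow> rho x \<le> C" and C0: "0 \<le> C"
    and N: "N \<ge> 1"
    and avg: "\<And>x. x \<le> N + 1 - nat \<lfloor>(real N) powr (9/10)\<rfloor> \<Longrightarrow>
          \<bar>avgA (nat \<lfloor>(real N) powr (9/10)\<rfloor>) x X
             - avgA' N (nat \<lfloor>(real N) powr (9/10)\<rfloor>) x rho\<bar> \<le> (1 / real N) powr (1/20)"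
  shows "real (cfg_size N X) \<ge> real N * (LINT x:{0..1}|lborel. rho x) - C * real N powr (9/10)
            - real (N+1) * (1 / real N) powr (1/20)"
proof -
  define L where "L = nat \<lfloor>(real N) powr (9/10)\<rfloor>"
  define e where "e = (1 / real N) powr (1/20)"
  define m where "m = (N + 1) div L"
  define tl where "tl = (\<lambda>r. tail_int r rho)"
  have e0: "e \<ge> 0" unfolding e_def by simp
  have p1: "real N powr (9/10) \<ge> 1" using N by (simp add: ge_one_powr_ge_zero)
  have L1: "L \<ge> 1" unfolding L_def using p1 by linarith
  have LleR: "real L \<le> real N powr (9/10)" unfolding L_def using p1 by linarith
  have "real N powr (9/10) \<le> real N powr 1" using N by (intro powr_mono) auto
  then have LN: "L \<le> N" using LleR N by simp
  have mL: "m * L \<le> N + 1" unfolding m_def by simp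
  have mL2: "N < m * L + L"
  proof -
    have "N + 1 = m * L + (N + 1) mod L" unfolding m_def by simp
    moreover have "(N + 1) mod L < L" using L1 by simp
    ultimately show ?thesis by linarith
  qed
  have Npos: "real N > 0" using N by simp
  have blk: "(\<Sum>y\<in>{i*L..<i*L+L}. real (X y)) \<ge> real N * (tl (real (i*L) / real N) - tl (real ((i+1)*L) / real N)) - real L * e"
    if i: "i < m" for i
  proof -
    have "(i + 1) * L \<le> m * L" using i by (intro mult_right_mono) auto
    then have xle: "i * L \<le> N + 1 - L" using mL by simp
    have a: "\<bar>avgA L (i*L) X - avgA' N L (i*L) rho\<bar> \<le> e"
      using avg[OF xle[unfolded L_def]] unfolding L_def e_def .
    have s1: "{i*L..i*L+L-1} = {i*L..<i*L+L}" using L1 by auto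
    have A: "avgA L (i*L) X = (\<Sum>y\<in>{i*L..<i*L+L}. real (X y)) / real L"
      unfolding avgA_def s1 by simp
    have A': "avgA' N L (i*L) rho = real N * (tl (real (i*L) / real N) - tl (real ((i+1)*L) / real N)) / real L"
      unfolding avgA'_def tl_def using L1 Npos by (simp add: field_simps)
    have "avgA L (i*L) X \<ge> avgA' N L (i*L) rho - e" using a by linarith
    then have "(\<Sum>y\<in>{i*L..<i*L+L}. real (X y)) / real L \<ge>
        real N * (tl (real (i*L) / real N) - tl (real ((i+1)*L) / real N)) / real L - e"
      using A A' by simp
    then show ?thesis using L1 div_aux[of "real L"] by (simp add: mult.commute)
  qed
  have "(\<Sum>y<m*L. real (X y)) = (\<Sum>i<m. \<Sum>y\<in>{i*L..<i*L+L}. real (X y))"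
    by (rule sum_blocks)
  also have "\<dots> \<ge> (\<Sum>i<m. real N * (tl (real (i*L) / real N) - tl (real ((i+1)*L) / real N)) - real L * e)"
    by (intro sum_mono blk) auto
  finally have S1: "(\<Sum>y<m*L. real (X y)) \<ge> (\<Sum>i<m. real N * (tl (real (i*L) / real N) - tl (real ((i+1)*L) / real N))) - real m * real L * e"
    by (simp add: sum_subtractf)
  have tel: "(\<Sum>i<m. real N * (tl (real (i*L) / real N) - tl (real ((i+1)*L) / real N)))
      = real N * (tl 0 - tl (real (m*L) / real N))"
  proof -
    have "(\<Sum>i<m. (tl (real (i*L) / real N) - tl (real ((i+1)*L) / real N))) = tl (real (0*L) / real N) - tl (real (m*L) / real N)"
      using sum_lessThan_telescope'[where f="\<lambda>i. tl (real (i*L) / real N)" and m=m] by simp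
    then show ?thesis by (simp add: sum_distrib_left[symmetric])
  qed
  have tl0: "tl 0 = (LINT x:{0..1}|lborel. rho x)" unfolding tl_def tail_int_def by simp
  have tlb: "tl (real (m*L) / real N) \<le> C * max 0 (1 - real (m*L) / real N)"
    unfolding tl_def by (rule tail_bound[OF C _ C0]) simp
  have "real N * max 0 (1 - real (m*L) / real N) = max 0 (real N - real (m*L))"
    using Npos by (simp add: max_def field_simps)
  also have "\<dots> \<le> real L"
  proof -
    have "real N < real (m * L + L)" using mL2 by linarith
    then show ?thesis by (simp add: max_def)
  qed
  finally have tlb2: "real N * tl (real (m*L) / real N) \<le> C * real L"
    using tlb Npos C0 by (smt (verit, best) mult.left_commute mult_left_mono)
  have mLe: "real m * real L * e \<le> real (N+1) * e"
    using mL e0 by (intro mult_right_mono) (simp_all flip: of_nat_mult)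
  have CL: "C * real L \<le> C * real N powr (9/10)" using LleR C0 by (rule mult_left_mono)
  have sub: "(\<Sum>y<m*L. real (X y)) \<le> (\<Sum>y\<in>{0..N}. real (X y))"
    by (rule sum_mono2) (use mL in auto)
  have "real (cfg_size N X) = (\<Sum>y\<in>{0..N}. real (X y))" unfolding cfg_size_def by simp
  then show ?thesis using S1 tel tl0 tlb2 mLe CL sub unfolding e_def
    by (simp add: right_diff_distrib)
qed


lemma blockI_eq: "blockI N delta k = {real k * ((real N)^2 * delta) .. real (Suc k) * ((real N)^2 * delta)}"
  unfolding blockI_def by (simp add: mult.assoc)

lemma walk_pos:
  fixes t :: "nat \<Rightarrow> real" and s :: "nat \<Rightarrow> int"
  assumes w: "(t, s) \<in> Omega0" and g: "(t, s) \<in> goodG j N delta gamma T"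
    and N: "N \<ge> 1" and d: "delta > 0"
    and n0: "real n0 - (T / delta) * (2 * real N powr (1/2 + gamma) + 1) - (real N * j * delta + real N powr (1/2 + gamma)) \<ge> 1"
    and k: "real k * delta \<le> T" and th: "t h \<in> blockI N delta k"
  shows "nwalk n0 s h \<ge> 1"
proof -
  define c where "c = (real N)^2 * delta"
  define R where "R = real N powr (1/2 + gamma)"
  define mu where "mu = real N * j * delta"
  have c: "c > 0" unfolding c_def using N d by simp
  have lim: "filterlim t at_top sequentially" and sm: "strict_mono t" and t0: "t 0 > 0"
    and sgn: "\<forall>h. s h = 1 \<or> s h = -1"
    using w unfolding Omega0_def by auto
  have tpos: "t i \<ge> 0" for i
  proof -
    have "t 0 \<le> t i" using sm by (simp add: strict_mono_less_eq)
    then show ?thesis using t0 by simp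
  qed
  define Bm where "Bm = (\<lambda>m. card {i. s i = 1 \<and> t i \<in> {real m * c .. real (Suc m) * c}})"
  define Am where "Am = (\<lambda>m. card {i. s i = -1 \<and> t i \<in> {real m * c .. real (Suc m) * c}})"
  have AB: "Am m = A0 N delta m (t, s)" "Bm m = B0 N delta m (t, s)" for m
    unfolding Am_def Bm_def A0_def B0_def blockI_eq c_def by (simp_all add: conj_commute)
  have gb: "\<bar>real (Am m) - mu\<bar> \<le> R \<and> \<bar>real (Bm m) - mu\<bar> \<le> R" if "real m * delta \<le> T" for m
    using g that unfolding goodG_def AB R_def mu_def by auto
  have th': "t h \<in> {real k * c .. real (Suc k) * c}" using th unfolding blockI_eq c_def .
  have main: "int (nwalk n0 s h) \<ge> int n0 + (\<Sum>m<k. int (Bm m)) - (\<Sum>m<k. int (Am m)) - int k - int (Am k)"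
    unfolding Am_def Bm_def by (rule walk_block_lower[OF lim sm c tpos sgn th'])
  then have main': "real (nwalk n0 s h) \<ge> real n0 + (\<Sum>m<k. real (Bm m)) - (\<Sum>m<k. real (Am m)) - real k - real (Am k)"
    using main[THEN of_int_le_iff[where 'a=real, THEN iffD2]] by simp
  have kle: "real m * delta \<le> T" if "m \<le> k" for m
    using k that d by (meson dual_order.trans mult_right_mono of_nat_le_iff less_imp_le)
  have gb2: "mu - R \<le> real (Bm m) \<and> real (Am m) \<le> mu + R" if "m < k" for m
    using gb[OF kle[of m]] that by (auto simp: abs_le_iff)
  have sB: "(\<Sum>m<k. real (Bm m)) \<ge> (\<Sum>m<k. mu - R)"
    by (intro sum_mono) (use gb2 in auto)
  have sA: "(\<Sum>m<k. real (Am m)) \<le> (\<Sum>m<k. mu + R)"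
    by (intro sum_mono) (use gb2 in auto)
  have Ak: "real (Am k) \<le> mu + R" using gb[OF k] by (auto simp: abs_le_iff)
  have R0: "R \<ge> 0" unfolding R_def by simp
  have kT: "real k \<le> T / delta" using k d by (simp add: field_simps)
  have "real k * (2 * R + 1) \<le> (T / delta) * (2 * R + 1)" using kT R0 by (intro mult_right_mono) auto
  moreover have "(\<Sum>m<k. mu - R) = real k * mu - real k * R" "(\<Sum>m<k. mu + R) = real k * mu + real k * R"
    by (simp_all add: algebra_simps)
  moreover have "real k * (2 * R + 1) = 2 * (real k * R) + real k" by (simp add: algebra_simps)
  moreover have "real n0 - (T / delta) * (2 * R + 1) - (mu + R) \<ge> 1" using n0 unfolding R_def mu_def .
  ultimately have "real (nwalk n0 s h) \<ge> 1"
    using main' sB sA Ak by linarith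
  then show ?thesis by simp
qed

lemma count_eq:
  fixes t :: "nat \<Rightarrow> real" and s :: "nat \<Rightarrow> int"
  assumes sgn: "\<forall>h. s h = 1 \<or> s h = -1"
    and pos: "\<And>h. t h \<in> I \<Longrightarrow> nwalk n0 s h \<ge> 1"
  shows "{h. t h \<in> I \<and> nwalk n0 s (Suc h) + 1 = nwalk n0 s h} = {h. s h = -1 \<and> t h \<in> I}"
    and "{h. t h \<in> I \<and> nwalk n0 s (Suc h) = nwalk n0 s h + 1} = {h. s h = 1 \<and> t h \<in> I}"
proof -
  have step: "int (nwalk n0 s (Suc h)) = int (nwalk n0 s h) + s h" if "t h \<in> I" for h
  proof -
    have "nwalk n0 s (Suc h) = nat (int (nwalk n0 s h) + s h)" by simp
    moreover have "int (nwalk n0 s h) + s h \<ge> 0" using pos[OF that] sgn[rule_format, of h] by auto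
    ultimately show ?thesis by simp
  qed
  show "{h. t h \<in> I \<and> nwalk n0 s (Suc h) + 1 = nwalk n0 s h} = {h. s h = -1 \<and> t h \<in> I}"
  proof (intro set_eqI iffI)
    fix h assume "h \<in> {h. t h \<in> I \<and> nwalk n0 s (Suc h) + 1 = nwalk n0 s h}"
    then have a: "t h \<in> I" "nwalk n0 s (Suc h) + 1 = nwalk n0 s h" by auto
    have "int (nwalk n0 s (Suc h)) + 1 = int (nwalk n0 s h)" using a(2) by linarith
    then have "s h = -1" using step[OF a(1)] by linarith
    then show "h \<in> {h. s h = -1 \<and> t h \<in> I}" using a by auto
  next
    fix h assume "h \<in> {h. s h = -1 \<and> t h \<in> I}"
    then have a: "t h \<in> I" "s h = -1" by auto
    have "int (nwalk n0 s (Suc h)) + 1 = int (nwalk n0 s h)" using step[OF a(1)] a(2) by linarith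
    then have "nwalk n0 s (Suc h) + 1 = nwalk n0 s h" by linarith
    then show "h \<in> {h. t h \<in> I \<and> nwalk n0 s (Suc h) + 1 = nwalk n0 s h}" using a by blast
  qed
  show "{h. t h \<in> I \<and> nwalk n0 s (Suc h) = nwalk n0 s h + 1} = {h. s h = 1 \<and> t h \<in> I}"
  proof (intro set_eqI iffI)
    fix h assume "h \<in> {h. t h \<in> I \<and> nwalk n0 s (Suc h) = nwalk n0 s h + 1}"
    then have a: "t h \<in> I" "nwalk n0 s (Suc h) = nwalk n0 s h + 1" by auto
    have "int (nwalk n0 s (Suc h)) = int (nwalk n0 s h) + 1" using a(2) by linarith
    then have "s h = 1" using step[OF a(1)] by linarith
    then show "h \<in> {h. s h = 1 \<and> t h \<in> I}" using a by auto
  next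
    fix h assume "h \<in> {h. s h = 1 \<and> t h \<in> I}"
    then have a: "t h \<in> I" "s h = 1" by auto
    have "int (nwalk n0 s (Suc h)) = int (nwalk n0 s h) + 1" using step[OF a(1)] a(2) by linarith
    then have "nwalk n0 s (Suc h) = nwalk n0 s h + 1" by linarith
    then show "h \<in> {h. t h \<in> I \<and> nwalk n0 s (Suc h) = nwalk n0 s h + 1}" using a by blast
  qed
qed


lemma part1:
  fixes j T gamma :: real and rho :: "real \<Rightarrow> real" and xi :: "nat \<Rightarrow> nat \<Rightarrow> nat"
  assumes j_pos: "0 < j"
    and rho_Linf: "\<exists>C. AE x in lborel. x \<in> {0..1} \<longrightarrow> 0 \<le> rho x \<and> rho x \<le> C"
    and rho_mass: "(LINT x:{0..1}|lborel. rho x) > 0"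
    and xi_avg: "\<And>N x. N \<ge> 1 \<Longrightarrow> x \<le> N + 1 - nat \<lfloor>(real N) powr (9/10)\<rfloor> \<Longrightarrow>
          \<bar>avgA (nat \<lfloor>(real N) powr (9/10)\<rfloor>) x (xi N)
             - avgA' N (nat \<lfloor>(real N) powr (9/10)\<rfloor>) x rho\<bar> \<le> (1 / real N) powr (1/20)"
    and T_pos: "0 < T"
    and gamma_pos: "0 < gamma" and gamma_small: "gamma < 1/2"
  shows "\<exists>dstar > 0. \<forall>delta. 0 < delta \<and> delta < dstar \<longrightarrow>
     (\<exists>N0. \<forall>N \<ge> N0. \<forall>w \<in> Omega0 \<inter> goodG j N delta gamma T. \<forall>k::nat. real k * delta \<le> T \<longrightarrow>
          Nminus N delta k w (cfg_size N (xi N)) = A0 N delta k w \<and>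
          Nplus N delta k w (cfg_size N (xi N)) = B0 N delta k w)"
proof -
  obtain C0 where C0: "AE x in lborel. x \<in> {0..1} \<longrightarrow> 0 \<le> rho x \<and> rho x \<le> C0" using rho_Linf by blast
  define C where "C = max C0 0"
  have C: "AE x in lborel. x \<in> {0..1} \<longrightarrow> rho x \<le> C" using C0 unfolding C_def
    by (auto elim!: eventually_mono)
  have Cnn: "0 \<le> C" unfolding C_def by simp
  define Ms where "Ms = (LINT x:{0..1}|lborel. rho x)"
  have Ms: "Ms > 0" using rho_mass unfolding Ms_def .
  show ?thesis
  proof (intro exI[of _ "Ms / (4 * j)"] conjI allI impI)
    show "Ms / (4 * j) > 0" using Ms j_pos by simp
    fix delta assume d: "0 < delta \<and> delta < Ms / (4 * j)"
    have d0: "delta > 0" using d by simp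
    have jd: "j * delta \<le> Ms / 4" using d j_pos by (simp add: field_simps)
    define Td where "Td = T / delta"
    have Td: "Td > 0" unfolding Td_def using d0 T_pos by simp
    have ev: "eventually (\<lambda>N::nat. real N * Ms * (3/4) - C * real N powr (9/10) - real (N+1) * (1 / real N) powr (1/20)
        - Td * (2 * real N powr (1/2 + gamma) + 1) - real N powr (1/2 + gamma) \<ge> 1) sequentially"
      using Ms Cnn Td gamma_pos gamma_small by real_asymp
    then obtain N1 where N1: "\<And>N. N \<ge> N1 \<Longrightarrow> real N * Ms * (3/4) - C * real N powr (9/10) - real (N+1) * (1 / real N) powr (1/20)
        - Td * (2 * real N powr (1/2 + gamma) + 1) - real N powr (1/2 + gamma) \<ge> 1"
      by (auto simp: eventually_sequentially)
    show "\<exists>N0. \<forall>N \<ge> N0. \<forall>w \<in> Omega0 \<inter> goodG j N delta gamma T. \<forall>k::nat. real k * delta \<le> T \<longrightarrow>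
          Nminus N delta k w (cfg_size N (xi N)) = A0 N delta k w \<and>
          Nplus N delta k w (cfg_size N (xi N)) = B0 N delta k w"
    proof (intro exI[of _ "max N1 1"] allI impI ballI)
      fix N w k assume N: "max N1 1 \<le> N" and w: "w \<in> Omega0 \<inter> goodG j N delta gamma T"
        and k: "real k * delta \<le> T"
      obtain t s where ts: "w = (t, s)" by (cases w)
      have N1': "N \<ge> 1" "N \<ge> N1" using N by auto
      define n0 where "n0 = cfg_size N (xi N)"
      have sz: "real n0 \<ge> real N * Ms - C * real N powr (9/10) - real (N+1) * (1 / real N) powr (1/20)"
        unfolding n0_def Ms_def by (rule size_lower[OF C Cnn N1'(1)]) (rule xi_avg[OF N1'(1)])
      have "real N * j * delta \<le> real N * Ms / 4" using jd by (simp add: mult.assoc mult_left_mono)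
      then have n0: "real n0 - (T / delta) * (2 * real N powr (1/2 + gamma) + 1) - (real N * j * delta + real N powr (1/2 + gamma)) \<ge> 1"
        using N1[OF N1'(2)] sz unfolding Td_def by linarith
      have wO: "(t, s) \<in> Omega0" and wg: "(t, s) \<in> goodG j N delta gamma T" using w ts by auto
      have sgn: "\<forall>h. s h = 1 \<or> s h = -1" using wO unfolding Omega0_def by auto
      have pos: "\<And>h. t h \<in> blockI N delta k \<Longrightarrow> nwalk n0 s h \<ge> 1"
        by (rule walk_pos[OF wO wg N1'(1) d0 n0 k])
      note ce = count_eq[OF sgn pos]
      show "Nminus N delta k w (cfg_size N (xi N)) = A0 N delta k w \<and>
          Nplus N delta k w (cfg_size N (xi N)) = B0 N delta k w"
        unfolding Nminus_def Nplus_def A0_def B0_def ts n0_def[symmetric] using ce by simp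
    qed
  qed
qed


definition Qm :: "real \<Rightarrow> nat \<Rightarrow> (real \<times> int) measure" where
  "Qm j N = density lborel (exponential_density (2 * j / real N)) \<Otimes>\<^sub>M measure_pmf (pmf_of_set {-1, 1::int})"

lemma baseM_eq: "baseM j N = PiM UNIV (\<lambda>_. Qm j N)"
  unfolding baseM_def Qm_def by simp

lemma prob_Qm: "0 < j \<Longrightarrow> N \<ge> 1 \<Longrightarrow> prob_space (Qm j N)"
  unfolding Qm_def
  by (intro prob_space_pair prob_space_exponential_density prob_space_measure_pmf) auto

lemma pps: "0 < j \<Longrightarrow> N \<ge> 1 \<Longrightarrow> product_prob_space (\<lambda>_. Qm j N)"
  by (simp add: product_prob_space_def product_prob_space_axioms_def product_sigma_finite_def
      prob_Qm prob_space_imp_sigma_finite)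

lemma prob_base: "0 < j \<Longrightarrow> N \<ge> 1 \<Longrightarrow> prob_space (baseM j N)"
proof -
  assume a: "0 < j" "N \<ge> 1"
  interpret P: product_prob_space "\<lambda>_. Qm j N" UNIV by (rule pps[OF a])
  show ?thesis unfolding baseM_eq by (rule P.P.prob_space_axioms)
qed

lemma coord_indep:
  assumes "0 < j" "N \<ge> 1"
  shows "prob_space.indep_vars (baseM j N) (\<lambda>_. Qm j N) (\<lambda>i v. v i) UNIV"
proof -
  interpret P: product_prob_space "\<lambda>_::nat. Qm j N" UNIV by (rule pps[OF assms])
  have "distr (PiM UNIV (\<lambda>_::nat. Qm j N)) (PiM UNIV (\<lambda>_. Qm j N)) (\<lambda>x. \<lambda>i\<in>UNIV. x i) = PiM UNIV (\<lambda>_. Qm j N)"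
  proof -
    have "distr (PiM UNIV (\<lambda>_. Qm j N)) (PiM UNIV (\<lambda>_. Qm j N)) (\<lambda>x. \<lambda>i\<in>UNIV. x i) =
      distr (PiM UNIV (\<lambda>_. Qm j N)) (PiM UNIV (\<lambda>_. Qm j N)) (\<lambda>x. x)"
      by (rule distr_cong) (auto simp: space_PiM)
    then show ?thesis using distr_id by metis
  qed
  moreover have "PiM UNIV (\<lambda>i::nat. distr (PiM UNIV (\<lambda>_. Qm j N)) (Qm j N) (\<lambda>v. v i)) = PiM UNIV (\<lambda>_. Qm j N)"
  proof -
    have "(\<lambda>i::nat. distr (PiM UNIV (\<lambda>_::nat. Qm j N)) (Qm j N) (\<lambda>v. v i)) = (\<lambda>_. Qm j N)"
      using P.PiM_component by (intro ext) simp
    then show ?thesis by (rule arg_cong)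
  qed
  ultimately show ?thesis unfolding baseM_eq
    by (subst P.P.indep_vars_iff_distr_eq_PiM) auto
qed


abbreviation "lam j N \<equiv> 2 * j / real N"

lemma coord_distr:
  assumes j: "0 < j" and N: "N \<ge> 1"
  shows "distributed (baseM j N) lborel (\<lambda>v. fst (v i)) (exponential_density (lam j N))"
proof -
  interpret P: product_prob_space "\<lambda>_::nat. Qm j N" UNIV by (rule pps[OF j N])
  define D where "D = density lborel (exponential_density (lam j N))"
  have lp: "lam j N > 0" using j N by simp
  have m1: "(\<lambda>v. v i) \<in> measurable (PiM UNIV (\<lambda>_::nat. Qm j N)) (Qm j N)"
    by (rule measurable_component_singleton) simp
  have m2: "fst \<in> measurable (Qm j N) lborel"
    unfolding Qm_def by (simp add: measurable_fst'')
  have "distr (PiM UNIV (\<lambda>_::nat. Qm j N)) lborel (\<lambda>v. fst (v i)) =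
      distr (distr (PiM UNIV (\<lambda>_::nat. Qm j N)) (Qm j N) (\<lambda>v. v i)) lborel fst"
    using distr_distr[OF m2 m1] by (simp add: comp_def)
  also have "\<dots> = distr (Qm j N) lborel fst" using P.PiM_component by simp
  also have "\<dots> = distr (Qm j N) D fst" by (rule distr_cong) (auto simp: D_def)
  also have "\<dots> = D" unfolding Qm_def D_def by (rule prob_space.distr_pair_fst[OF prob_space_measure_pmf])
  finally have "distr (baseM j N) lborel (\<lambda>v. fst (v i)) = D" unfolding baseM_eq .
  moreover have "(\<lambda>v. fst (v i)) \<in> measurable (baseM j N) lborel"
    unfolding baseM_eq using m1 m2 by (rule measurable_compose)
  ultimately show ?thesis unfolding distributed_def D_def by auto
qed

lemma sign_prob:
  assumes j: "0 < j" and N: "N \<ge> 1" and s: "s \<in> {-1, 1::int}"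
  shows "measure (baseM j N) {v \<in> space (baseM j N). snd (v i) = s} = 1/2"
proof -
  interpret P: product_prob_space "\<lambda>_::nat. Qm j N" UNIV by (rule pps[OF j N])
  define D where "D = density lborel (exponential_density (lam j N))"
  interpret D: prob_space D unfolding D_def by (rule prob_space_exponential_density) (use j N in simp)
  have eq: "{v \<in> space (PiM UNIV (\<lambda>_::nat. Qm j N)). snd (v i) = s} = {v \<in> space (PiM UNIV (\<lambda>_::nat. Qm j N)). v i \<in> UNIV \<times> {s}}"
    by (auto simp: mem_Times_iff)
  have sets: "UNIV \<times> {s} \<in> sets (Qm j N)"
    unfolding Qm_def by (intro pair_measureI) (auto simp: D_def)
  have "emeasure (baseM j N) {v \<in> space (baseM j N). snd (v i) = s} = emeasure (Qm j N) (UNIV \<times> {s})"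
    unfolding baseM_eq eq by (rule P.emeasure_PiM_Collect_single[OF _ sets]) simp
  also have "\<dots> = emeasure D UNIV * emeasure (measure_pmf (pmf_of_set {-1, 1::int})) {s}"
    unfolding Qm_def D_def[symmetric]
    by (rule measure_pmf.emeasure_pair_measure_Times) (auto simp: D_def)
  also have "\<dots> = ennreal (1/2)"
  proof -
    have "emeasure D UNIV = 1" using D.emeasure_space_1 by (simp add: D_def)
    moreover have "emeasure (measure_pmf (pmf_of_set {-1, 1::int})) {s} = ennreal (1/2)"
      using s by (auto simp: emeasure_pmf_single)
    ultimately show ?thesis by simp
  qed
  finally show ?thesis unfolding measure_def by (simp del: ennreal_half add: enn2real_ennreal)
qed


locale bctx =
  fixes j :: real and N :: nat
  assumes j: "0 < j" and N: "N \<ge> 1"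
begin

sublocale prob_space "baseM j N" by (rule prob_base[OF j N])

abbreviation "M \<equiv> baseM j N"
abbreviation "l \<equiv> lam j N"

lemma l_pos: "l > 0" using j N by simp

definition X :: "nat \<Rightarrow> (nat \<Rightarrow> real \<times> int) \<Rightarrow> real" where "X i v = fst (v i)"
definition Z :: "real \<Rightarrow> nat \<Rightarrow> (nat \<Rightarrow> real \<times> int) \<Rightarrow> real" where "Z K i v = max 0 (min (fst (v i)) K)"
definition Y :: "int \<Rightarrow> nat \<Rightarrow> (nat \<Rightarrow> real \<times> int) \<Rightarrow> real" where "Y s i v = (if snd (v i) = s then 1 else 0)"

lemma X_distr: "distributed M lborel (X i) (exponential_density l)"
  unfolding X_def[abs_def] by (rule coord_distr[OF j N])

lemma X_meas[measurable]: "X i \<in> borel_measurable M"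
  using distributed_measurable[OF X_distr] by simp

lemma coord_meas: "(\<lambda>v. v i) \<in> measurable M (Qm j N)"
  unfolding baseM_eq by (rule measurable_component_singleton) simp

lemma fst_meas: "(\<lambda>x. f (fst x)) \<in> borel_measurable (Qm j N)" if "f \<in> borel_measurable borel" for f :: "real \<Rightarrow> real"
proof -
  have "fst \<in> measurable (Qm j N) borel" unfolding Qm_def
    by (rule measurable_fst''[OF measurable_ident_sets]) simp
  then show ?thesis using that by (rule measurable_compose)
qed

lemma snd_meas: "(\<lambda>x. f (snd x)) \<in> borel_measurable (Qm j N)" for f :: "int \<Rightarrow> real"
proof -
  have "snd \<in> measurable (Qm j N) (count_space UNIV)" unfolding Qm_def
    by (rule measurable_snd''[OF measurable_ident_sets]) simp
  then show ?thesis by (rule measurable_compose) simp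
qed

lemma snd_coord_meas: "(\<lambda>v. snd (v i)) \<in> measurable M (count_space UNIV)"
proof -
  have "snd \<in> measurable (Qm j N) (count_space UNIV)" unfolding Qm_def
    by (rule measurable_snd''[OF measurable_ident_sets]) simp
  then show ?thesis using coord_meas by (rule measurable_compose[rotated])
qed

lemma fst_coord_meas: "(\<lambda>v. fst (v i)) \<in> borel_measurable M"
  using X_meas unfolding X_def .

lemma X_nonneg: "AE v in M. 0 \<le> X i v"
  by (subst distributed_AE2[OF X_distr]) (auto simp: erlang_density_def)

lemma X_moment: "expectation (\<lambda>v. X i v ^ p) = fact p / l ^ p"
  using erlang_ith_moment[OF l_pos X_distr[of i]] by simp

lemma X_moment_int: "integrable M (\<lambda>v. X i v ^ p)"
  using erlang_ith_moment_integrable[OF l_pos X_distr[of i]] by simp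

lemma X_mean: "expectation (X i) = 1 / l"
  using X_moment[of i 1] by simp

lemma X_int: "integrable M (X i)"
  using X_moment_int[of i 1] by simp

lemma X_tail: "K \<ge> 0 \<Longrightarrow> prob {v \<in> space M. K < X i v} = exp (- K * l)"
  using exponential_distributedD_gt[OF X_distr _ l_pos] by simp

lemma Z_meas[measurable]: "Z K i \<in> borel_measurable M"
  unfolding Z_def by (rule measurable_compose[OF coord_meas fst_meas]) simp

lemma Z_int: "K \<ge> 0 \<Longrightarrow> integrable M (Z K i)"
  by (rule integrable_const_bound[where B=K]) (auto simp: Z_def)

lemma Z_le_mean: "K \<ge> 0 \<Longrightarrow> expectation (Z K i) \<le> 1 / l"
proof -
  assume K: "K \<ge> 0"
  have "expectation (Z K i) \<le> expectation (X i)"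
    by (rule integral_mono_AE[OF Z_int[OF K] X_int]) (use X_nonneg[of i] in \<open>auto simp: Z_def X_def elim!: eventually_mono\<close>)
  then show ?thesis using X_mean by simp
qed

lemma Z_ge_mean:
  assumes K: "K > 0" and p: "p \<ge> 1"
  shows "expectation (Z K i) \<ge> 1 / l - fact p / (l ^ p * K ^ (p - 1))"
proof -
  have pt: "X i v - X i v ^ p / K ^ (p - 1) \<le> Z K i v" if x0: "0 \<le> X i v" for v
  proof (cases "X i v \<le> K")
    case True
    then have "Z K i v = X i v" using x0 by (simp add: Z_def X_def)
    moreover have "X i v ^ p / K ^ (p - 1) \<ge> 0" using x0 K by simp
    ultimately show ?thesis by simp
  next
    case False
    then have Zk: "Z K i v = K" using K by (simp add: Z_def X_def)
    have "1 \<le> (X i v / K) ^ (p - 1)" using False K by (intro one_le_power) simp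
    then have "X i v \<le> X i v * (X i v / K) ^ (p - 1)" using x0 by (simp add: mult_le_cancel_left1)
    also have "X i v * (X i v / K) ^ (p - 1) = X i v ^ p / K ^ (p - 1)"
      using p by (simp add: power_divide power_Suc[symmetric] del: power_Suc)
    finally show ?thesis using Zk K by simp
  qed
  have int2: "integrable M (\<lambda>v. X i v - X i v ^ p / K ^ (p - 1))"
    by (intro Bochner_Integration.integrable_diff X_int integrable_divide X_moment_int)
  have "expectation (\<lambda>v. X i v - X i v ^ p / K ^ (p - 1)) \<le> expectation (Z K i)"
    by (rule integral_mono_AE[OF int2 Z_int]) (use K X_nonneg[of i] pt in \<open>auto elim!: eventually_mono\<close>)
  moreover have "expectation (\<lambda>v. X i v - X i v ^ p / K ^ (p - 1)) = 1 / l - fact p / (l ^ p * K ^ (p - 1))"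
    using X_int X_moment_int X_mean X_moment by (simp add: Bochner_Integration.integral_diff)
  ultimately show ?thesis by simp
qed

lemma Y_meas[measurable]: "Y s i \<in> borel_measurable M"
  unfolding Y_def by (rule measurable_compose[OF coord_meas, of "\<lambda>x. if snd x = s then 1 else 0"]) (rule snd_meas)

lemma Y_mean: "s \<in> {-1, 1} \<Longrightarrow> expectation (Y s i) = 1/2"
proof -
  assume s: "s \<in> {-1, 1}"
  have "Y s i = indicator {v \<in> space M. snd (v i) = s}"
    by (auto simp: Y_def indicator_def fun_eq_iff space_PiM baseM_eq Qm_def space_pair_measure)
  moreover have "{v \<in> space M. snd (v i) = s} \<in> sets M"
  proof -
    have "{v \<in> space M. snd (v i) = s} = (\<lambda>v. snd (v i)) -` {s} \<inter> space M" by auto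
    then show ?thesis using measurable_sets[OF snd_coord_meas, of "{s}" i] by simp
  qed
  ultimately show ?thesis using sign_prob[OF j N s] by simp
qed

end


context bctx begin

lemma indep_Z: "indep_vars (\<lambda>_. borel) (\<lambda>i. Z K i) UNIV"
proof -
  have "indep_vars (\<lambda>_. borel) (\<lambda>i v. (\<lambda>x. max 0 (min (fst x) K)) (v i)) UNIV"
    by (rule indep_vars_compose2[OF coord_indep[OF j N]]) (rule fst_meas, simp)
  then show ?thesis unfolding Z_def[abs_def] by simp
qed

lemma indep_Y: "indep_vars (\<lambda>_. borel) (\<lambda>i. Y s i) UNIV"
proof -
  have "indep_vars (\<lambda>_. borel) (\<lambda>i v. (\<lambda>x. if snd x = s then 1 else 0 :: real) (v i)) UNIV"
    by (rule indep_vars_compose2[OF coord_indep[OF j N]]) (rule snd_meas)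
  then show ?thesis unfolding Y_def[abs_def] by simp
qed

lemma hoeff_Z:
  assumes I: "finite I" "I \<noteq> {}" and K: "K > 0" and e: "\<epsilon> \<ge> 0"
  shows "prob {v\<in>space M. (\<Sum>i\<in>I. Z K i v) \<ge> (\<Sum>i\<in>I. expectation (Z K i)) + \<epsilon>} \<le> exp (-2 * \<epsilon>\<^sup>2 / (real (card I) * K\<^sup>2))"
    and "prob {v\<in>space M. (\<Sum>i\<in>I. Z K i v) \<le> (\<Sum>i\<in>I. expectation (Z K i)) - \<epsilon>} \<le> exp (-2 * \<epsilon>\<^sup>2 / (real (card I) * K\<^sup>2))"
proof -
  interpret H: Hoeffding_ineq M I "Z K" "\<lambda>_. 0" "\<lambda>_. K" "\<Sum>i\<in>I. expectation (Z K i)"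
  proof unfold_locales
    show "finite I" by fact
    show "indep_vars (\<lambda>_. borel) (Z K) I" using indep_Z by (rule indep_vars_subset) simp
    show "AE x in M. Z K i x \<in> {0..K}" if "i \<in> I" for i using K by (auto simp: Z_def)
  qed
  have s: "(\<Sum>i\<in>I. (K - 0)\<^sup>2) = real (card I) * K\<^sup>2" by simp
  have pos: "(\<Sum>i\<in>I. (K - 0)\<^sup>2) > 0" using I K by (simp add: card_gt_0_iff)
  show "prob {v\<in>space M. (\<Sum>i\<in>I. Z K i v) \<ge> (\<Sum>i\<in>I. expectation (Z K i)) + \<epsilon>} \<le> exp (-2 * \<epsilon>\<^sup>2 / (real (card I) * K\<^sup>2))"
    using H.Hoeffding_ineq_ge[OF e pos] unfolding s .
  show "prob {v\<in>space M. (\<Sum>i\<in>I. Z K i v) \<le> (\<Sum>i\<in>I. expectation (Z K i)) - \<epsilon>} \<le> exp (-2 * \<epsilon>\<^sup>2 / (real (card I) * K\<^sup>2))"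
    using H.Hoeffding_ineq_le[OF e pos] unfolding s .
qed

lemma hoeff_Y:
  assumes I: "finite I" "I \<noteq> {}" and e: "\<epsilon> \<ge> 0"
  shows "prob {v\<in>space M. \<bar>(\<Sum>i\<in>I. Y s i v) - (\<Sum>i\<in>I. expectation (Y s i))\<bar> \<ge> \<epsilon>} \<le> 2 * exp (-2 * \<epsilon>\<^sup>2 / real (card I))"
proof -
  interpret H: Hoeffding_ineq M I "Y s" "\<lambda>_. 0" "\<lambda>_. 1" "\<Sum>i\<in>I. expectation (Y s i)"
  proof unfold_locales
    show "finite I" by fact
    show "indep_vars (\<lambda>_. borel) (Y s) I" using indep_Y by (rule indep_vars_subset) simp
    show "AE x in M. Y s i x \<in> {0..1}" if "i \<in> I" for i by (auto simp: Y_def)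
  qed
  have s: "(\<Sum>i\<in>I. (1 - 0::real)\<^sup>2) = real (card I)" by simp
  have pos: "(\<Sum>i\<in>I. (1 - 0::real)\<^sup>2) > 0" using I by (simp add: card_gt_0_iff)
  show ?thesis using H.Hoeffding_ineq_abs_ge[OF e pos] unfolding s .
qed

end


lemma card_range_sign:
  fixes s :: "nat \<Rightarrow> int"
  assumes "lo \<le> hi"
  shows "card {h. s h = c \<and> lo \<le> h \<and> h < hi} = card {h. h < hi \<and> s h = c} - card {h. h < lo \<and> s h = c}"
    and "card {h. h < lo \<and> s h = c} \<le> card {h. h < hi \<and> s h = c}"
proof -
  have e: "{h. h < hi \<and> s h = c} = {h. h < lo \<and> s h = c} \<union> {h. s h = c \<and> lo \<le> h \<and> h < hi}"
    using assms by auto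
  have d: "{h. h < lo \<and> s h = c} \<inter> {h. s h = c \<and> lo \<le> h \<and> h < hi} = {}" by auto
  have "card {h. h < hi \<and> s h = c} = card {h. h < lo \<and> s h = c} + card {h. s h = c \<and> lo \<le> h \<and> h < hi}"
    unfolding e by (rule card_Un_disjoint) auto
  then show "card {h. s h = c \<and> lo \<le> h \<and> h < hi} = card {h. h < hi \<and> s h = c} - card {h. h < lo \<and> s h = c}"
    and "card {h. h < lo \<and> s h = c} \<le> card {h. h < hi \<and> s h = c}" by simp_all
qed

lemma det_count:
  fixes S :: "nat \<Rightarrow> real" and s :: "nat \<Rightarrow> int" and c :: int
  defines "D \<equiv> \<lambda>m. real (card {h. h < m \<and> s h = c})"
  assumes ha1: "\<And>h. h < La \<Longrightarrow> S h < a" and ha2: "\<And>h. h \<ge> Ua \<Longrightarrow> S h > a"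
    and hb1: "\<And>h. h < Lb \<Longrightarrow> S h < b" and hb2: "\<And>h. h \<ge> Ub \<Longrightarrow> S h > b"
    and LU: "La \<le> Ub"
  shows "real (card {h. s h = c \<and> S h \<in> {a..b}}) \<le> D Ub - D La"
    and "real (card {h. s h = c \<and> S h \<in> {a..b}}) \<ge> D Lb - D Ua"
proof -
  have sub1: "{h. s h = c \<and> S h \<in> {a..b}} \<subseteq> {h. s h = c \<and> La \<le> h \<and> h < Ub}"
  proof
    fix h assume h: "h \<in> {h. s h = c \<and> S h \<in> {a..b}}"
    have "La \<le> h" using ha1[of h] h by force
    moreover have "h < Ub" using hb2[of h] h by force
    ultimately show "h \<in> {h. s h = c \<and> La \<le> h \<and> h < Ub}" using h by auto
  qed
  have "card {h. s h = c \<and> S h \<in> {a..b}} \<le> card {h. s h = c \<and> La \<le> h \<and> h < Ub}"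
    by (rule card_mono[OF _ sub1]) auto
  also have "\<dots> = card {h. h < Ub \<and> s h = c} - card {h. h < La \<and> s h = c}"
    by (rule card_range_sign(1)[OF LU])
  finally show "real (card {h. s h = c \<and> S h \<in> {a..b}}) \<le> D Ub - D La"
    unfolding D_def using card_range_sign(2)[OF LU, of s c] by linarith
  show "real (card {h. s h = c \<and> S h \<in> {a..b}}) \<ge> D Lb - D Ua"
  proof (cases "Ua \<le> Lb")
    case True
    have sub2: "{h. s h = c \<and> Ua \<le> h \<and> h < Lb} \<subseteq> {h. s h = c \<and> S h \<in> {a..b}}"
      using ha2 hb1 by (auto simp: less_imp_le)
    have fin: "finite {h. s h = c \<and> S h \<in> {a..b}}"
      by (rule finite_subset[OF sub1]) auto
    have "card {h. h < Lb \<and> s h = c} - card {h. h < Ua \<and> s h = c} = card {h. s h = c \<and> Ua \<le> h \<and> h < Lb}"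
      by (rule card_range_sign(1)[OF True, symmetric])
    also have "\<dots> \<le> card {h. s h = c \<and> S h \<in> {a..b}}" by (rule card_mono[OF fin sub2])
    finally show ?thesis unfolding D_def using card_range_sign(2)[OF True, of s c] by linarith
  next
    case False
    then have "D Lb \<le> D Ua" unfolding D_def using card_range_sign(2)[of Lb Ua s c] by simp
    then show ?thesis by simp
  qed
qed


lemma half_eq: "(x::real) / 2 = y \<Longrightarrow> x = 2 * y" by simp

locale bctx2 = bctx +
  fixes delta T gamma :: real
  assumes d: "0 < delta" and T: "0 < T" and g: "0 < gamma"
begin

definition "r = real N powr (1/2 + gamma/2)"
definition "KK = real N powr (1 + gamma/4)"
definition "kmax = nat \<lfloor>T / delta\<rfloor>"
definition "ak k = real k * ((real N)^2 * delta)"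
definition "Lf x = nat \<lfloor>l * x - r\<rfloor>"
definition "Uf x = nat \<lceil>l * x + r\<rceil>"
definition "Mmax = Uf (ak (Suc kmax))"

definition "Bneg = {v \<in> space M. \<exists>h. X h v < 0}"
definition "Bbig = {v \<in> space M. \<exists>i\<le>Mmax. KK < X i v}"
definition "Blo k = {v \<in> space M. 1 \<le> Lf (ak k) \<and> (\<Sum>i<Lf (ak k). Z KK i v) \<ge> ak k}"
definition "Bhi k = {v \<in> space M. (\<Sum>i\<le>Uf (ak k). Z KK i v) \<le> ak k}"
definition "BY s m = {v \<in> space M. \<bar>(\<Sum>i<m. Y s i v) - real m / 2\<bar> \<ge> r}"
definition "Bad = Bneg \<union> Bbig \<union> (\<Union>k\<le>Suc kmax. Blo k \<union> Bhi k) \<union> (\<Union>s\<in>{1,-1}. \<Union>m\<in>{1..Mmax}. BY s m)"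

lemma r_pos: "r > 0" unfolding r_def using N by simp
lemma KK_pos: "KK > 0" unfolding KK_def using N by simp

lemma ak_mono: "k \<le> k' \<Longrightarrow> ak k \<le> ak k'"
  unfolding ak_def using d by (intro mult_right_mono) auto

lemma Lf_ge: "real (Lf x) \<ge> l * x - r - 1" unfolding Lf_def by linarith
lemma Uf_le: "x \<ge> 0 \<Longrightarrow> real (Uf x) \<le> l * x + r + 1"
proof -
  assume x: "x \<ge> 0"
  have "0 \<le> l * x" using x l_pos by (intro mult_nonneg_nonneg) auto
  then have "l * x + r \<ge> 0" using r_pos by linarith
  then show ?thesis unfolding Uf_def by linarith
qed
lemma Uf_ge: "real (Uf x) \<ge> l * x + r" unfolding Uf_def by linarith
lemma Lf_le: "real (Lf x) \<le> max 0 (l * x - r)" unfolding Lf_def by linarith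
lemma Lf_Uf: "x \<le> y \<Longrightarrow> Lf x \<le> Uf y"
proof -
  assume "x \<le> y"
  then have "l * x \<le> l * y" using l_pos by (intro mult_left_mono) auto
  then show ?thesis unfolding Lf_def Uf_def using r_pos by (simp add: nat_le_eq_zle) linarith
qed
lemma Uf_mono: "x \<le> y \<Longrightarrow> Uf x \<le> Uf y"
proof -
  assume "x \<le> y"
  then have "l * x \<le> l * y" using l_pos by (intro mult_left_mono) auto
  then show ?thesis unfolding Uf_def by (intro nat_mono ceiling_mono) simp
qed

lemma le_Mmax: assumes "k \<le> Suc kmax" shows "Uf (ak k) \<le> Mmax" "Lf (ak k) \<le> Mmax"
proof -
  show "Uf (ak k) \<le> Mmax" unfolding Mmax_def by (rule Uf_mono[OF ak_mono[OF assms]])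
  show "Lf (ak k) \<le> Mmax" unfolding Mmax_def by (rule Lf_Uf[OF ak_mono[OF assms]])
qed

lemma l_diff: "l * (ak (Suc k) - ak k) / 2 = real N * j * delta"
  unfolding ak_def using N by (simp add: field_simps power2_eq_square)

lemma D_sum: "real (card {h. h < m \<and> snd (v h) = s}) = (\<Sum>i<m. Y s i v)"
proof -
  have "(\<Sum>i<m. Y s i v) = (\<Sum>i\<in>{..<m} \<inter> {i. snd (v i) = s}. 1) + (\<Sum>i\<in>{..<m} \<inter> - {i. snd (v i) = s}. 0)"
    unfolding Y_def by (rule sum.If_cases) simp
  also have "{..<m} \<inter> {i. snd (v i) = s} = {h. h < m \<and> snd (v h) = s}" by auto
  finally show ?thesis by simp
qed

lemma good_goodG:
  assumes v: "v \<in> space M" "v \<notin> Bad"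
    and big: "3 * r + 1 \<le> real N powr (1/2 + gamma)"
  shows "to_omega0 v \<in> goodG j N delta gamma T"
proof -
  define S where "S = (\<lambda>h. \<Sum>i\<le>h. X i v)"
  have Xnn: "X i v \<ge> 0" for i
  proof -
    have "v \<notin> Bneg" using v(2) unfolding Bad_def by blast
    then show ?thesis using v(1) unfolding Bneg_def by (simp add: not_less)
  qed
  have Xle: "X i v \<le> KK" if "i \<le> Mmax" for i
  proof -
    have "v \<notin> Bbig" using v(2) unfolding Bad_def by blast
    then show ?thesis using v(1) that unfolding Bbig_def by (simp add: not_less)
  qed
  have Smono: "S h \<le> S h'" if "h \<le> h'" for h h'
    unfolding S_def using that Xnn by (intro sum_mono2) auto
  have hlo: "S h < ak k" if k: "k \<le> Suc kmax" and h: "h < Lf (ak k)" for k h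
  proof -
    have L1: "1 \<le> Lf (ak k)" using h by simp
    have "v \<notin> Blo k" using v k unfolding Bad_def by blast
    then have lt: "(\<Sum>i<Lf (ak k). Z KK i v) < ak k" using v L1 unfolding Blo_def by auto
    have "S h \<le> (\<Sum>i<Lf (ak k). X i v)" unfolding S_def using h Xnn by (intro sum_mono2) auto
    also have "\<dots> = (\<Sum>i<Lf (ak k). Z KK i v)"
    proof (intro sum.cong refl)
      fix i assume "i \<in> {..<Lf (ak k)}"
      then have "i \<le> Mmax" using le_Mmax(2)[OF k] by simp
      then show "X i v = Z KK i v" using Xnn[of i] Xle[of i] by (simp add: Z_def X_def)
    qed
    finally show ?thesis using lt by simp
  qed
  have hhi: "S h > ak k" if k: "k \<le> Suc kmax" and h: "h \<ge> Uf (ak k)" for k h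
  proof -
    have "v \<notin> Bhi k" using v k unfolding Bad_def by blast
    then have gt: "(\<Sum>i\<le>Uf (ak k). Z KK i v) > ak k" using v unfolding Bhi_def by auto
    have "(\<Sum>i\<le>Uf (ak k). Z KK i v) \<le> (\<Sum>i\<le>Uf (ak k). X i v)"
      by (intro sum_mono) (use Xnn in \<open>auto simp: Z_def X_def\<close>)
    also have "\<dots> = S (Uf (ak k))" unfolding S_def ..
    also have "\<dots> \<le> S h" by (rule Smono[OF h])
    finally show ?thesis using gt by simp
  qed
  have Dbd: "\<bar>real (card {h. h < m \<and> snd (v h) = s}) - real m / 2\<bar> \<le> r" if "m \<le> Mmax" "s \<in> {1, -1}" for m s
  proof (cases "m = 0")
    case True then show ?thesis using r_pos by simp
  next
    case False
    then have "v \<notin> BY s m" using v that unfolding Bad_def by auto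
    then show ?thesis using v unfolding BY_def D_sum by auto
  qed
  have cnt: "\<bar>real (card {h. snd (v h) = s \<and> S h \<in> {ak k .. ak (Suc k)}}) - real N * j * delta\<bar> \<le> 3 * r + 1"
    if k: "k \<le> kmax" and s: "s \<in> {1, -1}" for k s
  proof -
    have k1: "k \<le> Suc kmax" "Suc k \<le> Suc kmax" using k by auto
    have ab: "ak k \<le> ak (Suc k)" by (rule ak_mono) simp
    have a0: "ak k \<ge> 0" unfolding ak_def using d by simp
    have b0: "ak (Suc k) \<ge> 0" unfolding ak_def using d by simp
    define D where "D = (\<lambda>m. real (card {h. h < m \<and> snd (v h) = s}))"
    have LU: "Lf (ak k) \<le> Uf (ak (Suc k))" by (rule Lf_Uf[OF ab])
    note dc = det_count[of "Lf (ak k)" S "ak k" "Uf (ak k)" "Lf (ak (Suc k))" "ak (Suc k)" "Uf (ak (Suc k))" "\<lambda>h. snd (v h)" s,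
       OF hlo[OF k1(1)] hhi[OF k1(1)] hlo[OF k1(2)] hhi[OF k1(2)] LU]
    have up: "real (card {h. snd (v h) = s \<and> S h \<in> {ak k..ak (Suc k)}}) \<le> D (Uf (ak (Suc k))) - D (Lf (ak k))"
      unfolding D_def by (rule dc(1))
    have lo: "real (card {h. snd (v h) = s \<and> S h \<in> {ak k..ak (Suc k)}}) \<ge> D (Lf (ak (Suc k))) - D (Uf (ak k))"
      unfolding D_def by (rule dc(2))
    have D1: "\<bar>D (Uf (ak (Suc k))) - real (Uf (ak (Suc k))) / 2\<bar> \<le> r" unfolding D_def by (rule Dbd[OF le_Mmax(1)[OF k1(2)] s])
    have D2: "\<bar>D (Lf (ak k)) - real (Lf (ak k)) / 2\<bar> \<le> r" unfolding D_def by (rule Dbd[OF le_Mmax(2)[OF k1(1)] s])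
    have D3: "\<bar>D (Lf (ak (Suc k))) - real (Lf (ak (Suc k))) / 2\<bar> \<le> r" unfolding D_def by (rule Dbd[OF le_Mmax(2)[OF k1(2)] s])
    have D4: "\<bar>D (Uf (ak k)) - real (Uf (ak k)) / 2\<bar> \<le> r" unfolding D_def by (rule Dbd[OF le_Mmax(1)[OF k1(1)] s])
    have e: "l * (ak (Suc k) - ak k) / 2 = real N * j * delta" by (rule l_diff)
    have lab: "l * ak (Suc k) - l * ak k = 2 * (real N * j * delta)" unfolding right_diff_distrib[symmetric] by (rule half_eq[OF e])
    define C where "C = real (card {h. snd (v h) = s \<and> S h \<in> {ak k..ak (Suc k)}})"
    have "C \<le> real N * j * delta + (3 * r + 1)" "C \<ge> real N * j * delta - (3 * r + 1)"
      using up lo D1 D2 D3 D4 Lf_ge[of "ak k"] Lf_ge[of "ak (Suc k)"] Uf_le[OF a0] Uf_le[OF b0] lab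
      unfolding C_def[symmetric] abs_le_iff by linarith+
    then show ?thesis unfolding C_def abs_le_iff by linarith
  qed
  show ?thesis unfolding goodG_def
  proof (intro CollectI allI impI conjI)
    fix k :: nat assume kT: "real k * delta \<le> T"
    have "real k \<le> T / delta" using kT d by (simp add: field_simps)
    then have k: "k \<le> kmax" unfolding kmax_def by linarith
    have bl: "blockI N delta k = {ak k .. ak (Suc k)}" unfolding blockI_def ak_def by (simp add: mult.assoc)
    have A: "A0 N delta k (to_omega0 v) = card {h. snd (v h) = -1 \<and> S h \<in> {ak k .. ak (Suc k)}}"
      unfolding A0_def to_omega0_def bl S_def X_def by simp
    have B: "B0 N delta k (to_omega0 v) = card {h. snd (v h) = 1 \<and> S h \<in> {ak k .. ak (Suc k)}}"
      unfolding B0_def to_omega0_def bl S_def X_def by simp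
    show "\<bar>real (A0 N delta k (to_omega0 v)) - real N * j * delta\<bar> \<le> real N powr (1 / 2 + gamma)"
      unfolding A using cnt[OF k, of "-1"] big by simp
    show "\<bar>real (B0 N delta k (to_omega0 v)) - real N * j * delta\<bar> \<le> real N powr (1 / 2 + gamma)"
      unfolding B using cnt[OF k, of 1] big by simp
  qed
qed

end


lemma exp_mono_frac:
  fixes c x y :: real
  assumes "c \<ge> 0" "0 < x" "x \<le> y"
  shows "exp (- c / x) \<le> exp (- c / y)"
proof -
  have "c / y \<le> c / x" using assms by (intro divide_left_mono) auto
  then show ?thesis by simp
qed

lemma exp_mono_frac2:
  fixes c x y :: real
  assumes "c \<ge> 0" "0 < x" "x \<le> y"
  shows "exp (- 2 * c / x) \<le> exp (- 2 * c / y)"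
proof -
  have "2 * c / y \<le> 2 * c / x" using assms by (intro divide_left_mono) auto
  then show ?thesis by simp
qed

lemma arith_hi:
  fixes L a r U e S :: real
  assumes "(L*a + r)/L \<le> U/L" "(L*a+r)/L = a + r/L" "r/L = r/(2*L) + r/(2*L)"
    "U*(1/L - e) = U/L - U*e" "U*(1/L-e) \<le> S" "U*e \<le> r/(2*L)"
  shows "a \<le> S - r/(2*L)"
  using assms by linarith

lemma div_helper: "(L::real) \<noteq> 0 \<Longrightarrow> (L * a - r) / L = a - r / L" "(L::real) \<noteq> 0 \<Longrightarrow> (L * a + r) / L = a + r / L"
  by (simp_all add: field_simps)

context bctx2 begin

lemma Bneg_sets: "Bneg \<in> sets M"
  unfolding Bneg_def by measurable

lemma prob_Bneg: "prob Bneg = 0"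
proof -
  have "AE v in M. \<forall>h. 0 \<le> X h v" using X_nonneg by (simp add: AE_all_countable)
  then have "AE v in M. \<not> (\<exists>h. X h v < 0)" by (auto elim!: eventually_mono simp: not_less)
  then show ?thesis unfolding Bneg_def by (rule prob_eq_0_AE)
qed

lemma Bbig_sets: "Bbig \<in> sets M"
  unfolding Bbig_def by measurable

lemma prob_Bbig: "prob Bbig \<le> (real Mmax + 1) * exp (- KK * l)"
proof -
  have "Bbig = (\<Union>i\<in>{..Mmax}. {v \<in> space M. KK < X i v})" unfolding Bbig_def by auto
  then have "prob Bbig \<le> (\<Sum>i\<in>{..Mmax}. prob {v \<in> space M. KK < X i v})"
    by (simp only:) (rule measure_UNION_le, auto)
  also have "\<dots> = (\<Sum>i\<in>{..Mmax}. exp (- KK * l))"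
    using X_tail KK_pos by (intro sum.cong) auto
  also have "\<dots> = (real Mmax + 1) * exp (- KK * l)" by simp
  finally show ?thesis .
qed

lemma Blo_sets: "Blo k \<in> sets M" unfolding Blo_def by measurable
lemma Bhi_sets: "Bhi k \<in> sets M" unfolding Bhi_def by measurable
lemma BY_sets: "BY s m \<in> sets M" unfolding BY_def by measurable

lemma prob_Blo:
  assumes k: "k \<le> Suc kmax"
  shows "prob (Blo k) \<le> exp (- 2 * (r / l)\<^sup>2 / ((real Mmax + 1) * KK\<^sup>2))"
proof (cases "Lf (ak k) = 0")
  case True
  then have "Blo k = {}" unfolding Blo_def by auto
  then show ?thesis by simp
next
  case False
  define L where "L = Lf (ak k)"
  have L1: "L \<ge> 1" using False unfolding L_def by simp
  have "real L \<le> max 0 (l * ak k - r)" unfolding L_def by (rule Lf_le)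
  then have Lle: "real L \<le> l * ak k - r" using L1 by linarith
  have E: "(\<Sum>i<L. expectation (Z KK i)) \<le> real L / l"
  proof -
    have "(\<Sum>i<L. expectation (Z KK i)) \<le> (\<Sum>i<L. 1 / l)"
      using Z_le_mean KK_pos by (intro sum_mono) auto
    then show ?thesis by simp
  qed
  have "real L / l \<le> (l * ak k - r) / l" using Lle l_pos by (intro divide_right_mono) auto
  also have "\<dots> = ak k - r / l" using j N by (intro div_helper) simp
  finally have E2: "(\<Sum>i<L. expectation (Z KK i)) + r / l \<le> ak k" using E by linarith
  have sub: "Blo k \<subseteq> {v\<in>space M. (\<Sum>i<L. Z KK i v) \<ge> (\<Sum>i<L. expectation (Z KK i)) + r / l}"
    unfolding Blo_def L_def[symmetric] using E2 by auto
  have "prob (Blo k) \<le> prob {v\<in>space M. (\<Sum>i<L. Z KK i v) \<ge> (\<Sum>i<L. expectation (Z KK i)) + r / l}"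
    by (rule finite_measure_mono[OF sub]) measurable
  also have "\<dots> \<le> exp (- 2 * (r / l)\<^sup>2 / (real (card {..<L}) * KK\<^sup>2))"
    using hoeff_Z(1)[of "{..<L}" KK "r / l"] L1 KK_pos r_pos l_pos j N by (auto simp: lessThan_empty_iff)
  also have "\<dots> \<le> exp (- 2 * (r / l)\<^sup>2 / ((real Mmax + 1) * KK\<^sup>2))"
  proof -
    have "L \<le> Mmax" unfolding L_def by (rule le_Mmax(2)[OF k])
    then have "real (card {..<L}) * KK\<^sup>2 \<le> (real Mmax + 1) * KK\<^sup>2" by (intro mult_right_mono) auto
    moreover have "0 < real (card {..<L}) * KK\<^sup>2" using L1 KK_pos by simp
    ultimately show ?thesis by (intro exp_mono_frac2) auto
  qed
  finally show ?thesis .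
qed

lemma prob_Bhi:
  assumes k: "k \<le> Suc kmax" and p: "p \<ge> 1"
    and cond: "(real Mmax + 1) * (fact p / (l ^ p * KK ^ (p - 1))) \<le> r / (2 * l)"
  shows "prob (Bhi k) \<le> exp (- 2 * (r / (2 * l))\<^sup>2 / ((real Mmax + 1) * KK\<^sup>2))"
proof -
  define U where "U = Uf (ak k)"
  define eK where "eK = fact p / (l ^ p * KK ^ (p - 1))"
  have eK0: "eK \<ge> 0" unfolding eK_def using l_pos KK_pos by simp
  have UM: "U \<le> Mmax" unfolding U_def by (rule le_Mmax(1)[OF k])
  have Uge: "real U \<ge> l * ak k + r" unfolding U_def by (rule Uf_ge)
  have E: "(\<Sum>i\<le>U. expectation (Z KK i)) \<ge> (real U + 1) * (1 / l - eK)"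
  proof -
    have a: "(\<Sum>i\<le>U. expectation (Z KK i)) \<ge> (\<Sum>i\<le>U. 1 / l - eK)"
      using Z_ge_mean[OF KK_pos p] unfolding eK_def by (intro sum_mono) auto
    have b: "(\<Sum>i\<le>U. 1 / l - eK) = (real U + 1) * (1 / l - eK)" by simp
    show ?thesis using a unfolding b .
  qed
  have "(real U + 1) * eK \<le> (real Mmax + 1) * eK" using UM eK0 by (intro mult_right_mono) auto
  then have Ue: "(real U + 1) * eK \<le> r / (2 * l)" using cond unfolding eK_def by linarith
  have "(real U + 1) / l \<ge> (l * ak k + r) / l" using Uge l_pos by (intro divide_right_mono) auto
  moreover have "(l * ak k + r) / l = ak k + r / l" using j N by (intro div_helper) simp
  moreover have "r / l = r / (2 * l) + r / (2 * l)" by (simp add: field_simps)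
  moreover have "(real U + 1) * (1 / l - eK) = (real U + 1) / l - (real U + 1) * eK"
    by (simp add: algebra_simps)
  ultimately have E2: "(\<Sum>i\<le>U. expectation (Z KK i)) - r / (2 * l) \<ge> ak k"
    using E Ue by (intro arith_hi[of l "ak k" r "real U + 1" eK])
  have sub: "Bhi k \<subseteq> {v\<in>space M. (\<Sum>i\<le>U. Z KK i v) \<le> (\<Sum>i\<le>U. expectation (Z KK i)) - r / (2 * l)}"
    unfolding Bhi_def U_def[symmetric] using E2 by auto
  have "prob (Bhi k) \<le> prob {v\<in>space M. (\<Sum>i\<le>U. Z KK i v) \<le> (\<Sum>i\<le>U. expectation (Z KK i)) - r / (2 * l)}"
    by (rule finite_measure_mono[OF sub]) measurable
  also have "\<dots> \<le> exp (- 2 * (r / (2 * l))\<^sup>2 / (real (card {..U}) * KK\<^sup>2))"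
    using hoeff_Z(2)[of "{..U}" KK "r / (2 * l)"] KK_pos r_pos l_pos j N by auto
  also have "\<dots> \<le> exp (- 2 * (r / (2 * l))\<^sup>2 / ((real Mmax + 1) * KK\<^sup>2))"
  proof -
    have "real (card {..U}) * KK\<^sup>2 \<le> (real Mmax + 1) * KK\<^sup>2" using UM by (intro mult_right_mono) auto
    moreover have "0 < real (card {..U}) * KK\<^sup>2" using KK_pos by simp
    ultimately show ?thesis by (intro exp_mono_frac2) auto
  qed
  finally show ?thesis .
qed

lemma prob_BY:
  assumes m: "1 \<le> m" "m \<le> Mmax" and s: "s \<in> {1, -1}"
  shows "prob (BY s m) \<le> 2 * exp (- 2 * r\<^sup>2 / real Mmax)"
proof -
  have "(\<Sum>i<m. expectation (Y s i)) = (\<Sum>i<m. 1 / 2)" using Y_mean s by (intro sum.cong) auto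
  then have E: "(\<Sum>i<m. expectation (Y s i)) = real m / 2" by simp
  have "prob (BY s m) \<le> 2 * exp (- 2 * r\<^sup>2 / real (card {..<m}))"
    unfolding BY_def using hoeff_Y[of "{..<m}" r s] m r_pos unfolding E by (auto simp: lessThan_empty_iff)
  also have "\<dots> \<le> 2 * exp (- 2 * r\<^sup>2 / real Mmax)"
    using exp_mono_frac2[of "r\<^sup>2" "real m" "real Mmax"] m by simp
  finally show ?thesis .
qed

end


lemma card_Collect_alt:
  fixes P :: "nat \<Rightarrow> bool"
  shows "card {h. P h} = n \<longleftrightarrow>
    (\<exists>m. (\<forall>h\<ge>m. \<not> P h) \<and> card {h. h < m \<and> P h} = n) \<or> ((\<forall>m. \<exists>h\<ge>m. P h) \<and> n = 0)"
proof (cases "\<exists>m. \<forall>h\<ge>m. \<not> P h")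
  case True
  then obtain m where m: "\<forall>h\<ge>m. \<not> P h" by blast
  have e: "{h. P h} = {h. h < m \<and> P h}" using m by (auto simp: not_le[symmetric])
  have e2: "card {h. h < m' \<and> P h} = card {h. h < m \<and> P h}" if "\<forall>h\<ge>m'. \<not> P h" for m'
  proof -
    have "{h. h < m' \<and> P h} = {h. P h}" using that by (auto simp: not_le[symmetric])
    then show ?thesis using e by simp
  qed
  show ?thesis using True e e2 by auto
next
  case False
  then have "infinite {h. P h}"
    by (metis (mono_tags, lifting) finite_nat_set_iff_bounded_le mem_Collect_eq not_less_eq_eq)
  then show ?thesis using False by auto
qed

lemma measurable_card_Collect:
  assumes [measurable]: "\<And>h. Measurable.pred M (P h)"
  shows "(\<lambda>v. card {h::nat. P h v}) \<in> measurable M (count_space UNIV)"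
proof (subst measurable_count_space_eq2_countable, intro conjI ballI)
  show "(\<lambda>v. card {h. P h v}) \<in> space M \<rightarrow> UNIV" by simp
  fix n :: nat
  have fm: "(\<lambda>v. (\<Sum>h<m. if P h v then 1 else 0 :: real)) \<in> borel_measurable M" for m by measurable
  have cs: "real (card {h. h < m \<and> P h v}) = (\<Sum>h<m. if P h v then 1 else 0 :: real)" for m v
  proof -
    have "(\<Sum>h<m. if P h v then 1 else 0 :: real) = (\<Sum>h\<in>{..<m} \<inter> {h. P h v}. 1) + (\<Sum>h\<in>{..<m} \<inter> - {h. P h v}. 0)"
      by (rule sum.If_cases) simp
    also have "{..<m} \<inter> {h. P h v} = {h. h < m \<and> P h v}" by auto
    finally show ?thesis by simp
  qed
  have "(\<lambda>v. card {h. P h v}) -` {n} \<inter> space M = {v \<in> space M.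
      (\<exists>m. (\<forall>h\<ge>m. \<not> P h v) \<and> (\<Sum>h<m. if P h v then 1 else 0 :: real) = real n) \<or> ((\<forall>m. \<exists>h\<ge>m. P h v) \<and> n = 0)}"
    unfolding cs[symmetric] of_nat_eq_iff using card_Collect_alt[of "\<lambda>h. P h _" n] by auto
  also have "\<dots> \<in> sets M" by measurable
  finally show "(\<lambda>v. card {h. P h v}) -` {n} \<inter> space M \<in> sets M" .
qed

context bctx2 begin

lemma goodG_sets: "{v \<in> space M. to_omega0 v \<in> goodG j N delta gamma T} \<in> sets M"
proof -
  have m1[measurable]: "(\<lambda>v. card {h. snd (v h) = c \<and> (\<Sum>i\<le>h. fst (v i)) \<in> blockI N delta k}) \<in> measurable M (count_space UNIV)" for c k
  proof (rule measurable_card_Collect)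
    fix h
    have [measurable]: "(\<lambda>v. snd (v i)) \<in> measurable M (count_space UNIV)" for i by (rule snd_coord_meas)
    have [measurable]: "(\<lambda>v. fst (v i)) \<in> borel_measurable M" for i by (rule fst_coord_meas)
    show "Measurable.pred M (\<lambda>v. snd (v h) = c \<and> (\<Sum>i\<le>h. fst (v i)) \<in> blockI N delta k)"
      unfolding blockI_def by measurable
  qed
  have "{v \<in> space M. to_omega0 v \<in> goodG j N delta gamma T} = {v \<in> space M. \<forall>k::nat. real k * delta \<le> T \<longrightarrow>
      \<bar>real (card {h. snd (v h) = -1 \<and> (\<Sum>i\<le>h. fst (v i)) \<in> blockI N delta k}) - real N * j * delta\<bar> \<le> (real N) powr (1/2 + gamma) \<and>
      \<bar>real (card {h. snd (v h) = 1 \<and> (\<Sum>i\<le>h. fst (v i)) \<in> blockI N delta k}) - real N * j * delta\<bar> \<le> (real N) powr (1/2 + gamma)}"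
    unfolding goodG_def A0_def B0_def to_omega0_def by simp
  also have "\<dots> \<in> sets M" by measurable
  finally show ?thesis .
qed

end


context bctx2 begin

lemma prob_Bad:
  assumes p: "p \<ge> 1"
    and cond: "(real Mmax + 1) * (fact p / (l ^ p * KK ^ (p - 1))) \<le> r / (2 * l)"
  shows "prob Bad \<le> (real Mmax + 1) * exp (- KK * l)
     + (real kmax + 2) * (exp (- 2 * (r / l)\<^sup>2 / ((real Mmax + 1) * KK\<^sup>2)) + exp (- 2 * (r / (2 * l))\<^sup>2 / ((real Mmax + 1) * KK\<^sup>2)))
     + 4 * real Mmax * exp (- 2 * r\<^sup>2 / real Mmax)"
proof -
  define E1 where "E1 = exp (- 2 * (r / l)\<^sup>2 / ((real Mmax + 1) * KK\<^sup>2))"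
  define E2 where "E2 = exp (- 2 * (r / (2 * l))\<^sup>2 / ((real Mmax + 1) * KK\<^sup>2))"
  define E3 where "E3 = exp (- 2 * r\<^sup>2 / real Mmax)"
  define U1 where "U1 = (\<Union>k\<le>Suc kmax. Blo k \<union> Bhi k)"
  define U2 where "U2 = (\<Union>s\<in>{1,-1::int}. \<Union>m\<in>{1..Mmax}. BY s m)"
  have U1s: "U1 \<in> sets M" unfolding U1_def using Blo_sets Bhi_sets by (intro sets.finite_UN) auto
  have U2s: "U2 \<in> sets M" unfolding U2_def using BY_sets by (intro sets.finite_UN) auto
  have pU1: "prob U1 \<le> (real kmax + 2) * (E1 + E2)"
  proof -
    have "prob U1 \<le> (\<Sum>k\<le>Suc kmax. prob (Blo k \<union> Bhi k))"
      unfolding U1_def using Blo_sets Bhi_sets by (intro measure_UNION_le) auto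
    also have "\<dots> \<le> (\<Sum>k\<le>Suc kmax. E1 + E2)"
    proof (intro sum_mono)
      fix k assume k: "k \<in> {..Suc kmax}"
      have "prob (Blo k \<union> Bhi k) \<le> prob (Blo k) + prob (Bhi k)"
        using Blo_sets Bhi_sets by (intro measure_Un_le) auto
      also have "\<dots> \<le> E1 + E2" unfolding E1_def E2_def
        using prob_Blo[of k] prob_Bhi[of k p, OF _ p cond] k by (intro add_mono) auto
      finally show "prob (Blo k \<union> Bhi k) \<le> E1 + E2" .
    qed
    also have "\<dots> = (real kmax + 2) * (E1 + E2)" by simp
    finally show ?thesis .
  qed
  have pU2: "prob U2 \<le> 4 * real Mmax * E3"
  proof -
    have "prob U2 \<le> (\<Sum>s\<in>{1,-1::int}. prob (\<Union>m\<in>{1..Mmax}. BY s m))"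
      unfolding U2_def using BY_sets by (intro measure_UNION_le sets.finite_UN) auto
    also have "\<dots> \<le> (\<Sum>s\<in>{1,-1::int}. real Mmax * (2 * E3))"
    proof (intro sum_mono)
      fix s :: int assume s: "s \<in> {1, -1}"
      have "prob (\<Union>m\<in>{1..Mmax}. BY s m) \<le> (\<Sum>m\<in>{1..Mmax}. prob (BY s m))"
        using BY_sets by (intro measure_UNION_le) auto
      also have "\<dots> \<le> (\<Sum>m\<in>{1..Mmax}. 2 * E3)" unfolding E3_def
        using prob_BY s by (intro sum_mono) auto
      also have "\<dots> = real Mmax * (2 * E3)" by simp
      finally show "prob (\<Union>m\<in>{1..Mmax}. BY s m) \<le> real Mmax * (2 * E3)" .
    qed
    also have "\<dots> = 4 * real Mmax * E3" by simp
    finally show ?thesis .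
  qed
  have "Bad = Bneg \<union> Bbig \<union> U1 \<union> U2" unfolding Bad_def U1_def U2_def by simp
  then have "prob Bad \<le> prob (Bneg \<union> Bbig \<union> U1) + prob U2"
    using Bneg_sets Bbig_sets U1s U2s by (simp add: measure_Un_le)
  also have "prob (Bneg \<union> Bbig \<union> U1) \<le> prob (Bneg \<union> Bbig) + prob U1"
    using Bneg_sets Bbig_sets U1s by (simp add: measure_Un_le)
  also have "prob (Bneg \<union> Bbig) \<le> prob Bneg + prob Bbig"
    using Bneg_sets Bbig_sets by (simp add: measure_Un_le)
  finally show ?thesis using prob_Bneg prob_Bbig pU1 pU2 unfolding E1_def E2_def E3_def by linarith
qed

end


definition Fb :: "real \<Rightarrow> real \<Rightarrow> real \<Rightarrow> real \<Rightarrow> real \<Rightarrow> real" where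
  "Fb j g d km N = (let r = N powr (1/2+g/2); K = N powr (1+g/4); l = 2*j/N; Mb = 2*j*(km+1)*d*N + r + 1 in
     (Mb + 1) * exp (- K * l)
     + (km + 2) * (exp (- 2 * (r / l)\<^sup>2 / ((Mb + 1) * K\<^sup>2)) + exp (- 2 * (r / (2 * l))\<^sup>2 / ((Mb + 1) * K\<^sup>2)))
     + 4 * Mb * exp (- 2 * r\<^sup>2 / Mb))"

lemma mono_exp_M:
  fixes c M M' :: real
  assumes "c \<ge> 0" "0 < M" "M \<le> M'"
  shows "exp (- c / M) \<le> exp (- c / M')"
proof -
  have "c / M' \<le> c / M" using assms by (intro divide_left_mono) auto
  then show ?thesis by simp
qed

context bctx2 begin

lemma Mmax_pos: "real Mmax \<ge> r"
  unfolding Mmax_def using Uf_ge[of "ak (Suc kmax)"] l_pos d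
  by (smt (verit) ak_def mult_nonneg_nonneg of_nat_0_le_iff zero_le_power2)

lemma Mmax_le: "real Mmax \<le> 2*j*(real kmax+1)*delta*real N + r + 1"
proof -
  have "real Mmax \<le> l * ak (Suc kmax) + r + 1" unfolding Mmax_def
    by (rule Uf_le) (simp add: ak_def d less_imp_le)
  also have "l * ak (Suc kmax) = 2*j*(real kmax+1)*delta*real N"
    unfolding ak_def using N by (simp add: power2_eq_square field_simps)
  finally show ?thesis .
qed

lemma part2_N:
  assumes p: "p \<ge> 1"
    and cond: "(real Mmax + 1) * (fact p / (l ^ p * KK ^ (p - 1))) \<le> r / (2 * l)"
    and big: "3 * r + 1 \<le> real N powr (1/2 + gamma)"
  shows "P0 j N (goodG j N delta gamma T) \<ge> 1 - Fb j gamma delta (real kmax) (real N)"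
proof -
  define G where "G = {v \<in> space M. to_omega0 v \<in> goodG j N delta gamma T}"
  have Bad_sets: "Bad \<in> sets M" unfolding Bad_def
    using Bneg_sets Bbig_sets Blo_sets Bhi_sets BY_sets
    by (intro sets.Un sets.finite_UN) auto
  have sub: "space M - Bad \<subseteq> G" unfolding G_def using good_goodG[OF _ _ big] by auto
  have "1 - prob Bad = prob (space M - Bad)" using prob_compl[OF Bad_sets] by simp
  also have "\<dots> \<le> prob G" by (rule finite_measure_mono[OF sub]) (unfold G_def, rule goodG_sets)
  finally have G1: "prob G \<ge> 1 - prob Bad" .
  define Mb where "Mb = 2*j*(real kmax+1)*delta*real N + r + 1"
  have M0: "real Mmax > 0" using Mmax_pos r_pos by linarith
  have MM: "real Mmax \<le> Mb" unfolding Mb_def by (rule Mmax_le)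
  have kk: "(real kmax + 2) \<ge> 0" by simp
  have t1: "(real Mmax + 1) * exp (- KK * l) \<le> (Mb + 1) * exp (- KK * l)"
    using MM by (intro mult_right_mono) auto
  have t2: "exp (- 2 * (r / l)\<^sup>2 / ((real Mmax + 1) * KK\<^sup>2)) \<le> exp (- 2 * (r / l)\<^sup>2 / ((Mb + 1) * KK\<^sup>2))"
    using mono_exp_M[of "2 * (r / l)\<^sup>2" "(real Mmax + 1) * KK\<^sup>2" "(Mb + 1) * KK\<^sup>2"] MM KK_pos
    by (simp add: mult_right_mono)
  have t3: "exp (- 2 * (r / (2 * l))\<^sup>2 / ((real Mmax + 1) * KK\<^sup>2)) \<le> exp (- 2 * (r / (2 * l))\<^sup>2 / ((Mb + 1) * KK\<^sup>2))"
    using mono_exp_M[of "2 * (r / (2 * l))\<^sup>2" "(real Mmax + 1) * KK\<^sup>2" "(Mb + 1) * KK\<^sup>2"] MM KK_pos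
    by (simp add: mult_right_mono)
  have t4: "4 * real Mmax * exp (- 2 * r\<^sup>2 / real Mmax) \<le> 4 * Mb * exp (- 2 * r\<^sup>2 / Mb)"
  proof -
    have "exp (- 2 * r\<^sup>2 / real Mmax) \<le> exp (- 2 * r\<^sup>2 / Mb)"
      using mono_exp_M[of "2 * r\<^sup>2" "real Mmax" Mb] MM M0 by simp
    then show ?thesis using MM M0 by (intro mult_mono) auto
  qed
  have "prob Bad \<le> Fb j gamma delta (real kmax) (real N)"
  proof -
    have "prob Bad \<le> (real Mmax + 1) * exp (- KK * l)
     + (real kmax + 2) * (exp (- 2 * (r / l)\<^sup>2 / ((real Mmax + 1) * KK\<^sup>2)) + exp (- 2 * (r / (2 * l))\<^sup>2 / ((real Mmax + 1) * KK\<^sup>2)))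
     + 4 * real Mmax * exp (- 2 * r\<^sup>2 / real Mmax)" by (rule prob_Bad[OF p cond])
    also have "\<dots> \<le> (Mb + 1) * exp (- KK * l)
     + (real kmax + 2) * (exp (- 2 * (r / l)\<^sup>2 / ((Mb + 1) * KK\<^sup>2)) + exp (- 2 * (r / (2 * l))\<^sup>2 / ((Mb + 1) * KK\<^sup>2)))
     + 4 * Mb * exp (- 2 * r\<^sup>2 / Mb)"
      using t1 t2 t3 t4 kk by (intro add_mono mult_left_mono) auto
    also have "\<dots> = Fb j gamma delta (real kmax) (real N)"
      unfolding Fb_def Let_def Mb_def r_def KK_def by simp
    finally show ?thesis .
  qed
  moreover have "P0 j N (goodG j N delta gamma T) = prob G" unfolding P0_def G_def ..
  ultimately show ?thesis using G1 by linarith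
qed

end


lemma Fb_lim:
  fixes g j d km n :: real assumes "0<g" "g < 1/2" "j > 0" "d > 0" "km \<ge> 0"
  shows "((\<lambda>N::real. Fb j g d km N * N powr n) \<longlongrightarrow> 0) at_top"
proof -
  define Mb where "Mb = (\<lambda>N::real. 2*j*(km+1)*d*N + N powr (1/2+g/2) + 1)"
  have A: "((\<lambda>N::real. (Mb N + 1) * exp (- (N powr (1+g/4)) * (2*j/N)) * N powr n) \<longlongrightarrow> 0) at_top"
    using assms unfolding Mb_def by real_asymp
  have B: "((\<lambda>N::real. exp (- 2 * (N powr (1/2+g/2) / (2*j/N))\<^sup>2 / ((Mb N + 1) * (N powr (1+g/4))\<^sup>2)) * N powr n) \<longlongrightarrow> 0) at_top"
    using assms unfolding Mb_def by real_asymp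
  have B': "((\<lambda>N::real. exp (- 2 * (N powr (1/2+g/2) / (2 * (2*j/N)))\<^sup>2 / ((Mb N + 1) * (N powr (1+g/4))\<^sup>2)) * N powr n) \<longlongrightarrow> 0) at_top"
    using assms unfolding Mb_def by real_asymp
  have C: "((\<lambda>N::real. 4 * Mb N * exp (- 2 * (N powr (1/2+g/2))\<^sup>2 / Mb N) * N powr n) \<longlongrightarrow> 0) at_top"
    using assms unfolding Mb_def by real_asymp
  have BB: "((\<lambda>N::real. (km + 2) * (exp (- 2 * (N powr (1/2+g/2) / (2*j/N))\<^sup>2 / ((Mb N + 1) * (N powr (1+g/4))\<^sup>2)) * N powr n
      + exp (- 2 * (N powr (1/2+g/2) / (2 * (2*j/N)))\<^sup>2 / ((Mb N + 1) * (N powr (1+g/4))\<^sup>2)) * N powr n)) \<longlongrightarrow> (km + 2) * (0 + 0)) at_top"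
    by (intro tendsto_mult tendsto_const tendsto_add B B')
  have all: "((\<lambda>N::real. (Mb N + 1) * exp (- (N powr (1+g/4)) * (2*j/N)) * N powr n
     + (km + 2) * (exp (- 2 * (N powr (1/2+g/2) / (2*j/N))\<^sup>2 / ((Mb N + 1) * (N powr (1+g/4))\<^sup>2)) * N powr n
      + exp (- 2 * (N powr (1/2+g/2) / (2 * (2*j/N)))\<^sup>2 / ((Mb N + 1) * (N powr (1+g/4))\<^sup>2)) * N powr n)
     + 4 * Mb N * exp (- 2 * (N powr (1/2+g/2))\<^sup>2 / Mb N) * N powr n) \<longlongrightarrow> 0 + (km + 2) * (0 + 0) + 0) at_top"
    by (intro tendsto_add A BB C)
  have eq: "Fb j g d km N * N powr n = (Mb N + 1) * exp (- (N powr (1+g/4)) * (2*j/N)) * N powr n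
     + (km + 2) * (exp (- 2 * (N powr (1/2+g/2) / (2*j/N))\<^sup>2 / ((Mb N + 1) * (N powr (1+g/4))\<^sup>2)) * N powr n
      + exp (- 2 * (N powr (1/2+g/2) / (2 * (2*j/N)))\<^sup>2 / ((Mb N + 1) * (N powr (1+g/4))\<^sup>2)) * N powr n)
     + 4 * Mb N * exp (- 2 * (N powr (1/2+g/2))\<^sup>2 / Mb N) * N powr n" for N
    unfolding Fb_def Let_def Mb_def by (simp only: distrib_right mult.assoc)
  show ?thesis using all unfolding eq[symmetric] by simp
qed

lemma fact_bound:
  fixes j g :: real and N p :: nat
  assumes j: "0 < j" and N: "N \<ge> 1" and g: "0 < g" and p: "p = nat \<lceil>4 / g\<rceil> + 1"
  shows "fact p / ((2 * j / real N) ^ p * (real N powr (1 + g/4)) ^ (p - 1)) \<le> fact p / (2 * j) ^ p"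
proof -
  have N0: "real N > 0" using N by simp
  have e1: "(real N powr (1 + g/4)) ^ (p - 1) = real N powr (real (p - 1) * (1 + g/4))"
    using N0 by (simp add: powr_power)
  have "real (p - 1) \<ge> 4 / g" unfolding p by linarith
  then have "real (p - 1) * (g / 4) \<ge> (4 / g) * (g / 4)" using g by (intro mult_right_mono) auto
  moreover have "(4 / g) * (g / 4) = 1" using g by simp
  ultimately have "real (p - 1) * (g / 4) \<ge> 1" by linarith
  moreover have "real p = real (p - 1) + 1" unfolding p by simp
  moreover have "real (p - 1) * (1 + g/4) = real (p - 1) + real (p - 1) * (g / 4)" by (simp add: algebra_simps)
  ultimately have le: "real p \<le> real (p - 1) * (1 + g/4)" by linarith
  have "real N ^ p = real N powr real p" using N0 by (simp add: powr_realpow)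
  also have "\<dots> \<le> real N powr (real (p - 1) * (1 + g/4))" using N by (intro powr_mono le) simp
  finally have K: "real N ^ p \<le> (real N powr (1 + g/4)) ^ (p - 1)" unfolding e1 .
  have "(2 * j) ^ p = (2 * j / real N) ^ p * real N ^ p" using N0 by (simp add: power_divide)
  also have "\<dots> \<le> (2 * j / real N) ^ p * (real N powr (1 + g/4)) ^ (p - 1)"
    using K j N0 by (intro mult_left_mono) auto
  finally have "(2 * j) ^ p \<le> (2 * j / real N) ^ p * (real N powr (1 + g/4)) ^ (p - 1)" .
  moreover have "(2 * j) ^ p > 0" using j by simp
  ultimately show ?thesis by (intro divide_left_mono) auto
qed

lemma part2:
  fixes j T gamma delta :: real
  assumes j: "0 < j" and d: "0 < delta" and T: "0 < T" and g: "0 < gamma" and g2: "gamma < 1/2"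
  shows "\<forall>n::nat. \<exists>c. \<forall>N \<ge> 1. P0 j N (goodG j N delta gamma T) \<ge> 1 - c * (1 / real N) ^ n"
proof
  fix n :: nat
  define km where "km = nat \<lfloor>T / delta\<rfloor>"
  define p where "p = nat \<lceil>4 / gamma\<rceil> + 1"
  define cp where "cp = fact p / (2 * j) ^ p"
  have cp: "cp > 0" unfolding cp_def using j by simp
  have kmr: "real km \<ge> 0" by simp
  have ev1: "eventually (\<lambda>N::nat. Fb j gamma delta (real km) (real N) * real N powr real n < 1) sequentially"
  proof -
    have "eventually (\<lambda>x::real. Fb j gamma delta (real km) x * x powr real n < 1) at_top"
      using order_tendstoD(2)[OF Fb_lim[OF g g2 j d kmr, of "real n"]] by simp
    then show ?thesis using filterlim_iff[THEN iffD1, OF filterlim_real_sequentially] by blast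
  qed
  have ev2: "eventually (\<lambda>N::nat. (2*j*(real km+1)*delta*real N + real N powr (1/2+gamma/2) + 1 + 1) * cp
      \<le> real N powr (1/2+gamma/2) / (2 * (2*j/real N))) sequentially"
    using g g2 j d kmr cp by real_asymp
  have ev3: "eventually (\<lambda>N::nat. 3 * real N powr (1/2+gamma/2) + 1 \<le> real N powr (1/2+gamma)) sequentially"
    using g g2 by real_asymp
  obtain N2 where N2: "\<And>N. N \<ge> N2 \<Longrightarrow> Fb j gamma delta (real km) (real N) * real N powr real n < 1 \<and>
      (2*j*(real km+1)*delta*real N + real N powr (1/2+gamma/2) + 1 + 1) * cp
      \<le> real N powr (1/2+gamma/2) / (2 * (2*j/real N)) \<and>
      3 * real N powr (1/2+gamma/2) + 1 \<le> real N powr (1/2+gamma)"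
    using eventually_conj[OF ev1 eventually_conj[OF ev2 ev3]] by (auto simp: eventually_sequentially)
  define c where "c = max 1 (real N2 ^ n)"
  show "\<exists>c. \<forall>N \<ge> 1. P0 j N (goodG j N delta gamma T) \<ge> 1 - c * (1 / real N) ^ n"
  proof (intro exI[of _ c] allI impI)
    fix N :: nat assume N: "N \<ge> 1"
    have N0: "real N > 0" using N by simp
    show "P0 j N (goodG j N delta gamma T) \<ge> 1 - c * (1 / real N) ^ n"
    proof (cases "N \<ge> N2")
      case True
      interpret B: bctx2 j N delta T gamma by unfold_locales (use j N d T g in auto)
      have km: "B.kmax = km" unfolding B.kmax_def km_def ..
      have rr: "B.r = real N powr (1/2+gamma/2)" unfolding B.r_def ..
      have p1: "p \<ge> 1" unfolding p_def by simp
      have fb: "fact p / (B.l ^ p * B.KK ^ (p - 1)) \<le> cp"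
        unfolding cp_def B.KK_def by (rule fact_bound[OF j N g p_def])
      have fb0: "fact p / (B.l ^ p * B.KK ^ (p - 1)) \<ge> 0" using B.l_pos B.KK_pos by simp
      have "real B.Mmax + 1 \<le> 2*j*(real km+1)*delta*real N + real N powr (1/2+gamma/2) + 1 + 1"
        using B.Mmax_le unfolding km rr by linarith
      then have "(real B.Mmax + 1) * (fact p / (B.l ^ p * B.KK ^ (p - 1))) \<le>
          (2*j*(real km+1)*delta*real N + real N powr (1/2+gamma/2) + 1 + 1) * cp"
        using fb fb0 by (intro mult_mono) auto
      also have "\<dots> \<le> B.r / (2 * B.l)" using N2[OF True] unfolding rr by simp
      finally have cond: "(real B.Mmax + 1) * (fact p / (B.l ^ p * B.KK ^ (p - 1))) \<le> B.r / (2 * B.l)" .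
      have big: "3 * B.r + 1 \<le> real N powr (1/2 + gamma)" using N2[OF True] unfolding rr by simp
      have P: "P0 j N (goodG j N delta gamma T) \<ge> 1 - Fb j gamma delta (real km) (real N)"
        using B.part2_N[OF p1 cond big] unfolding km .
      have "Fb j gamma delta (real km) (real N) * real N ^ n < 1"
        using N2[OF True] N0 by (simp add: powr_realpow)
      then have "Fb j gamma delta (real km) (real N) < 1 / real N ^ n"
        using N0 by (simp add: field_simps)
      also have "\<dots> = (1 / real N) ^ n" by (simp add: power_one_over)
      also have "\<dots> \<le> c * (1 / real N) ^ n"
        using mult_right_mono[of 1 c "(1 / real N) ^ n"] N0 unfolding c_def by simp
      finally show ?thesis using P by linarith
    next
      case False
      have "1 \<le> (real N2 / real N) ^ n" using False N0 by (intro one_le_power) simp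
      also have "\<dots> = real N2 ^ n * (1 / real N) ^ n" by (simp add: power_divide field_simps)
      also have "\<dots> \<le> c * (1 / real N) ^ n" unfolding c_def by (intro mult_right_mono) auto
      finally have "1 - c * (1 / real N) ^ n \<le> 0" by simp
      moreover have "P0 j N (goodG j N delta gamma T) \<ge> 0" unfolding P0_def by simp
      ultimately show ?thesis by linarith
    qed
  qed
qed



theorem mainTheorem6:
  fixes j T gamma :: real and rho :: "real \<Rightarrow> real" and xi :: "nat \<Rightarrow> nat \<Rightarrow> nat"
  assumes j_pos: "0 < j"
    and rho_meas: "set_borel_measurable lborel {0..1} rho"
    and rho_Linf: "\<exists>C. AE x in lborel. x \<in> {0..1} \<longrightarrow> 0 \<le> rho x \<and> rho x \<le> C"
    and rho_mass: "(LINT x:{0..1}|lborel. rho x) > 0"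
    and xi_supp: "\<And>N x. N \<ge> 1 \<Longrightarrow> x > N \<Longrightarrow> xi N x = 0"
    and xi_avg: "\<And>N x. N \<ge> 1 \<Longrightarrow> x \<le> N + 1 - nat \<lfloor>(real N) powr (9/10)\<rfloor> \<Longrightarrow>
          \<bar>avgA (nat \<lfloor>(real N) powr (9/10)\<rfloor>) x (xi N)
             - avgA' N (nat \<lfloor>(real N) powr (9/10)\<rfloor>) x rho\<bar> \<le> (1 / real N) powr (1/20)"
    and xi_edge: "\<And>N. N \<ge> 1 \<Longrightarrow> Redge rho < 1 \<Longrightarrow>
          \<bar>real (cfg_right N (xi N)) / real N - Redge rho\<bar> \<le> (1 / real N) powr (1/20)"
    and T_pos: "0 < T"
    and gamma_pos: "0 < gamma" and gamma_small: "gamma < 1/2"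
  shows "\<exists>dstar > 0. \<forall>delta. 0 < delta \<and> delta < dstar \<longrightarrow>
     (\<exists>N0. \<forall>N \<ge> N0. \<forall>w \<in> Omega0 \<inter> goodG j N delta gamma T. \<forall>k::nat. real k * delta \<le> T \<longrightarrow>
          Nminus N delta k w (cfg_size N (xi N)) = A0 N delta k w \<and>
          Nplus N delta k w (cfg_size N (xi N)) = B0 N delta k w)
   \<and> (\<forall>n::nat. \<exists>c. \<forall>N \<ge> 1. P0 j N (goodG j N delta gamma T) \<ge> 1 - c * (1 / real N) ^ n)"
  proof -
  obtain dstar where ds: "dstar > 0" and p1: "\<forall>delta. 0 < delta \<and> delta < dstar \<longrightarrow>
     (\<exists>N0. \<forall>N \<ge> N0. \<forall>w \<in> Omega0 \<inter> goodG j N delta gamma T. \<forall>k::nat. real k * delta \<le> T \<longrightarrow>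
          Nminus N delta k w (cfg_size N (xi N)) = A0 N delta k w \<and>
          Nplus N delta k w (cfg_size N (xi N)) = B0 N delta k w)"
    using part1[OF j_pos rho_Linf rho_mass xi_avg T_pos gamma_pos gamma_small] by blast
  show ?thesis
  proof (rule exI[of _ dstar], rule conjI[OF ds], rule allI, rule impI)
    fix delta assume d: "0 < delta \<and> delta < dstar"
    have A: "\<exists>N0. \<forall>N \<ge> N0. \<forall>w \<in> Omega0 \<inter> goodG j N delta gamma T. \<forall>k::nat. real k * delta \<le> T \<longrightarrow>
          Nminus N delta k w (cfg_size N (xi N)) = A0 N delta k w \<and>
          Nplus N delta k w (cfg_size N (xi N)) = B0 N delta k w"
      using p1 d by blast
    have B: "\<forall>n::nat. \<exists>c. \<forall>N \<ge> 1. P0 j N (goodG j N delta gamma T) \<ge> 1 - c * (1 / real N) ^ n"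
      using part2[OF j_pos _ T_pos gamma_pos gamma_small] d by blast
    show "(\<exists>N0. \<forall>N \<ge> N0. \<forall>w \<in> Omega0 \<inter> goodG j N delta gamma T. \<forall>k::nat. real k * delta \<le> T \<longrightarrow>
          Nminus N delta k w (cfg_size N (xi N)) = A0 N delta k w \<and>
          Nplus N delta k w (cfg_size N (xi N)) = B0 N delta k w)
   \<and> (\<forall>n::nat. \<exists>c. \<forall>N \<ge> 1. P0 j N (goodG j N delta gamma T) \<ge> 1 - c * (1 / real N) ^ n)"
      using A B by blast
  qed
qed

end
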